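(* In the spatiotemporal E-GARCH model, assume $\mathbf{I}-\lambda_0\mathbf{W}_2$ is invertible, $\varrho(\lambda_1\mathbf{S})<1$ and $\varrho(\lambda_0\mathbf{W}_2)<1$, and let $\{\boldsymbol{\varepsilon}_t\}$ be i.i.d. $N(\mathbf{0},\mathbf{I}_n)$. Then the strictly stationary solution $\boldsymbol{Y}_t=\boldsymbol{\varepsilon}_t\odot\exp\big(\tfrac12\sum_{v\ge0}\lambda_1^v\mathbf{S}^v\boldsymbol{\Delta}_{t-v}\big)$ has finite moments of all orders and is weakly stationary. Writing $\mathbf{M}=\rho_0\lambda_1\mathbf{S}\mathbf{W}_1+\rho_1\mathbf{I}$ and $\mathbf{A}=((1-\lambda_1)\mathbf{I}-\lambda_0\mathbf{W}_2)^{-1}$, for all $t$ and $i,j\in\{1,\dots,n\}$ (all infinite products converging): $$E(Y_t(\boldsymbol{s}_i))=\exp\big(\tfrac12\boldsymbol{e}_i'\mathbf{A}\boldsymbol{\alpha}_1\big)\,E\Big(\varepsilon_1(\boldsymbol{s}_i)\exp\big(\tfrac12\rho_0\boldsymbol{e}_i'\mathbf{S}\mathbf{W}_1g(\boldsymbol{\varepsilon}_1)\big)\Big)\prod_{v=1}^{\infty}E\Big(\exp\big(\tfrac12\lambda_1^{v-1}\boldsymbol{e}_i'\mathbf{S}^{v}\mathbf{M}g(\boldsymbol{\varepsilon}_1)\big)\Big),$$ $$E(Y_t(\boldsymbol{s}_i)^2)=\exp\big(\boldsymbol{e}_i'\mathbf{A}\boldsymbol{\alpha}_1\big)\,E\Big(\varepsilon_1(\boldsymbol{s}_i)^2\exp\big(\rho_0\boldsymbol{e}_i'\mathbf{S}\mathbf{W}_1g(\boldsymbol{\varepsilon}_1)\big)\Big)\prod_{v=1}^{\infty}E\Big(\exp\big(\lambda_1^{v-1}\boldsymbol{e}_i'\mathbf{S}^{v}\mathbf{M}g(\boldsymbol{\varepsilon}_1)\big)\Big),$$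 $$E(Y_t(\boldsymbol{s}_i)Y_t(\boldsymbol{s}_j))=\exp\big(\tfrac12(\boldsymbol{e}_i+\boldsymbol{e}_j)'\mathbf{A}\boldsymbol{\alpha}_1\big)\,E\Big(\varepsilon_1(\boldsymbol{s}_i)\varepsilon_1(\boldsymbol{s}_j)\exp\big(\tfrac12\rho_0(\boldsymbol{e}_i+\boldsymbol{e}_j)'\mathbf{S}\mathbf{W}_1g(\boldsymbol{\varepsilon}_1)\big)\Big)\prod_{v=1}^{\infty}E\Big(\exp\big(\tfrac12\lambda_1^{v-1}(\boldsymbol{e}_i+\boldsymbol{e}_j)'\mathbf{S}^{v}\mathbf{M}g(\boldsymbol{\varepsilon}_1)\big)\Big).$$ None of these quantities depends on $t$.
   Context: Fix $n\ge1$ and known deterministic real $n\times n$ matrices $\mathbf{W}_1,\mathbf{W}_2$. Parameters: $\boldsymbol{\alpha}_1\in\mathbb{R}^n$, $\rho_0,\rho_1,\lambda_0,\lambda_1,\Theta\in\mathbb{R}$, $\xi\ge0$ (standing assumption $|\Theta|<\xi$). Componentwise $g(\boldsymbol{\varepsilon}_t)=\Theta\boldsymbol{\varepsilon}_t+\xi(|\boldsymbol{\varepsilon}_t|-E|\boldsymbol{\varepsilon}_t|)$. Model: $Y_t(\boldsymbol{s}_i)=\sqrt{h_t(\boldsymbol{s}_i)}\,\varepsilon_t(\boldsymbol{s}_i)$ with $\ln\boldsymbol{h}_t=\boldsymbol{\alpha}_1+\rho_0\mathbf{W}_1g(\boldsymbol{\varepsilon}_t)+\rho_1 g(\boldsymbol{\varepsilon}_{t-1})+\lambda_0\mathbf{W}_2\ln\boldsymbol{h}_t+\lambda_1\ln\boldsymbol{h}_{t-1}$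 (componentwise $\ln$). $\mathbf{S}=(\mathbf{I}-\lambda_0\mathbf{W}_2)^{-1}$, $\boldsymbol{\Delta}_t=\mathbf{S}(\boldsymbol{\alpha}_1+\rho_0\mathbf{W}_1g(\boldsymbol{\varepsilon}_t)+\rho_1g(\boldsymbol{\varepsilon}_{t-1}))$. $\varrho(\cdot)$ is spectral radius, $\odot$ Hadamard product, $\boldsymbol{e}_i$ the $i$-th standard unit vector. *)

theory Defs
  imports "HOL-Probability.Probability"
begin

primrec mpow :: "real^'n^'n \<Rightarrow> nat \<Rightarrow> real^'n^'n" where
  "mpow A 0 = mat 1"
| "mpow A (Suc v) = A ** mpow A (v)"

definition spec_rad :: "real^'n^'n \<Rightarrow> real" where
  "spec_rad A = Sup {cmod \<mu> | \<mu>. \<exists>x::complex^'n. x \<noteq> 0 \<and>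
       (\<chi> i j. complex_of_real (A $ i $ j)) *v x = \<mu> *s x}"

definition gfun :: "'a measure \<Rightarrow> (int \<Rightarrow> 'a \<Rightarrow> real^'n) \<Rightarrow> real \<Rightarrow> real \<Rightarrow> int \<Rightarrow> 'a \<Rightarrow> real^'n" where
  "gfun M eps \<Theta> \<xi> t \<omega> = (\<chi> i. \<Theta> * eps t \<omega> $ i
       + \<xi> * (\<bar>eps t \<omega> $ i\<bar> - prob_space.expectation M (\<lambda>\<omega>'. \<bar>eps t \<omega>' $ i\<bar>)))"

definition Smat :: "real \<Rightarrow> real^'n^'n \<Rightarrow> real^'n^'n" where
  "Smat lam0 W2 = matrix_inv (mat 1 - lam0 *\<^sub>R W2)"

definition Delta :: "'a measure \<Rightarrow> (int \<Rightarrow> 'a \<Rightarrow> real^'n) \<Rightarrow> real \<Rightarrow> real \<Rightarrow>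
    real^'n^'n \<Rightarrow> real^'n^'n \<Rightarrow> real^'n \<Rightarrow> real \<Rightarrow> real \<Rightarrow> real \<Rightarrow> int \<Rightarrow> 'a \<Rightarrow> real^'n" where
  "Delta M eps \<Theta> \<xi> W1 W2 alpha1 rho0 rho1 lam0 t \<omega> =
     Smat lam0 W2 *v (alpha1 + rho0 *\<^sub>R (W1 *v gfun M eps \<Theta> \<xi> t \<omega>) + rho1 *\<^sub>R gfun M eps \<Theta> \<xi> (t - 1) \<omega>)"

definition logvol_series :: "'a measure \<Rightarrow> (int \<Rightarrow> 'a \<Rightarrow> real^'n) \<Rightarrow> real \<Rightarrow> real \<Rightarrow>
    real^'n^'n \<Rightarrow> real^'n^'n \<Rightarrow> real^'n \<Rightarrow> real \<Rightarrow> real \<Rightarrow> real \<Rightarrow> real \<Rightarrow> int \<Rightarrow> nat \<Rightarrow> 'a \<Rightarrow> real^'n" where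
  "logvol_series M eps \<Theta> \<xi> W1 W2 alpha1 rho0 rho1 lam0 lam1 t v \<omega> =
     (lam1 ^ v) *\<^sub>R (mpow (Smat lam0 W2) v *v Delta M eps \<Theta> \<xi> W1 W2 alpha1 rho0 rho1 lam0 (t - int v) \<omega>)"

definition Yproc :: "'a measure \<Rightarrow> (int \<Rightarrow> 'a \<Rightarrow> real^'n) \<Rightarrow> real \<Rightarrow> real \<Rightarrow>
    real^'n^'n \<Rightarrow> real^'n^'n \<Rightarrow> real^'n \<Rightarrow> real \<Rightarrow> real \<Rightarrow> real \<Rightarrow> real \<Rightarrow> int \<Rightarrow> 'a \<Rightarrow> real^'n" where
  "Yproc M eps \<Theta> \<xi> W1 W2 alpha1 rho0 rho1 lam0 lam1 t \<omega> =
     (\<chi> i. eps t \<omega> $ i * exp ((1/2) *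
        (\<Sum>v. logvol_series M eps \<Theta> \<xi> W1 W2 alpha1 rho0 rho1 lam0 lam1 t v \<omega>) $ i))"

end

theory Submission
  imports Defs "Jordan_Normal_Form.Spectral_Radius"
begin


no_notation Matrix.vec_index (infixl "$" 100)

lemma mpow_Suc': "mpow A (Suc k) = mpow A k ** A"
  by (induction k) (simp_all add: matrix_mul_assoc)

lemma mpow_scale: "mpow (c *\<^sub>R A) k = (c ^ k) *\<^sub>R mpow A k"
  by (induction k) (simp_all add: matrix_scalar_ac scalar_matrix_assoc[symmetric])

lemma mpow_comm: "A ** mpow A k = mpow A k ** A"
  by (metis mpow.simps(2) mpow_Suc')

lemma jnf_bound:
  fixes C :: "real^'n^'n"
  assumes ev: "\<And>\<mu> x. x \<noteq> 0 \<Longrightarrow> (\<chi> i j. complex_of_real (C $ i $ j)) *v x = \<mu> *s x \<Longrightarrow> cmod \<mu> < 1"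
  shows "\<exists>c. \<forall>k i j. \<bar>mpow C k $ i $ j\<bar> \<le> c"
proof -
  define n where "n = CARD('n)"
  obtain h where h: "bij_betw h {0..<n} (UNIV::'n set)"
    using ex_bij_betw_nat_finite[of "UNIV::'n set"] unfolding n_def by auto
  define hi where "hi = inv_into {0..<n} h"
  have hi1: "hi i < n" for i
    unfolding hi_def using h by (metis atLeastLessThan_iff bij_betw_def inv_into_into iso_tuple_UNIV_I)
  have hi2: "h (hi i) = i" for i
    unfolding hi_def using h by (meson bij_betw_inv_into_right iso_tuple_UNIV_I)
  have hh: "a < n \<Longrightarrow> hi (h a) = a" for a
    unfolding hi_def using h by (simp add: bij_betw_def inv_into_f_f)
  have hinj: "a < n \<Longrightarrow> b < n \<Longrightarrow> h a = h b \<longleftrightarrow> a = b" for a b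
    using hh by metis
  have reidx: "(\<Sum>l\<in>UNIV. f l) = (\<Sum>a\<in>{0..<n}. f (h a))" for f :: "'n \<Rightarrow> 'b::comm_monoid_add"
    using sum.reindex_bij_betw[OF h, of f] by simp
  define CM where "CM = Matrix.mat n n (\<lambda>(a,b). complex_of_real (C $ h a $ h b))"
  have CMc: "CM \<in> carrier_mat n n" unfolding CM_def by simp
  have pow: "CM ^\<^sub>m k = Matrix.mat n n (\<lambda>(a,b). complex_of_real (mpow C k $ h a $ h b))" for k
  proof (induction k)
    case 0
    show ?case
      by (rule eq_matI) (auto simp: Finite_Cartesian_Product.mat_def hinj CM_def)
  next
    case (Suc k)
    have "CM ^\<^sub>m Suc k = CM ^\<^sub>m k * CM" by simp
    also have "\<dots> = Matrix.mat n n (\<lambda>(a,b). complex_of_real (mpow C (Suc k) $ h a $ h b))"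
    proof (rule eq_matI)
      fix a b assume ab: "a < dim_row (Matrix.mat n n (\<lambda>(a,b). complex_of_real (mpow C (Suc k) $ h a $ h b)))"
        "b < dim_col (Matrix.mat n n (\<lambda>(a,b). complex_of_real (mpow C (Suc k) $ h a $ h b)))"
      then have a: "a < n" and b: "b < n" by auto
      have "(CM ^\<^sub>m k * CM) $$ (a, b) = (\<Sum>l\<in>{0..<n}. complex_of_real (mpow C k $ h a $ h l) * complex_of_real (C $ h l $ h b))"
        using a b unfolding Suc by (simp add: CM_def scalar_prod_def)
      also have "\<dots> = complex_of_real (\<Sum>l\<in>UNIV. mpow C k $ h a $ l * C $ l $ h b)"
        by (simp add: reidx)
      also have "\<dots> = complex_of_real (mpow C (Suc k) $ h a $ h b)"
        by (simp only: mpow_Suc') (simp add: matrix_matrix_mult_def)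
      finally show "(CM ^\<^sub>m k * CM) $$ (a, b) = Matrix.mat n n (\<lambda>(a,b). complex_of_real (mpow C (Suc k) $ h a $ h b)) $$ (a, b)"
        using a b by simp
    qed (auto simp: CM_def)
    finally show ?case .
  qed
  have n0: "n > 0" unfolding n_def by simp
  from spectral_radius_mem_max(1)[OF CMc n0] obtain \<mu> where
    \<mu>: "\<mu> \<in> spectrum CM" and sr: "spectral_radius CM = norm \<mu>" by auto
  from \<mu> obtain v where v: "v \<in> carrier_vec n" "v \<noteq> 0\<^sub>v n" "CM *\<^sub>v v = \<mu> \<cdot>\<^sub>v v"
    unfolding spectrum_def eigenvalue_def eigenvector_def using CMc by auto
  define x where "x = (\<chi> i. Matrix.vec_index v (hi i))"
  have "x \<noteq> 0"
  proof
    assume "x = 0"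
    then have "Matrix.vec_index v a = 0" if "a < n" for a
      using that hh[OF that] by (metis vec_lambda_beta x_def zero_index)
    then have "v = 0\<^sub>v n" using v(1) by (intro eq_vecI) auto
    with v(2) show False by simp
  qed
  moreover have "(\<chi> i j. complex_of_real (C $ i $ j)) *v x = \<mu> *s x"
  proof (subst Finite_Cartesian_Product.vec_eq_iff, intro allI)
    fix i
    have "((\<chi> i j. complex_of_real (C $ i $ j)) *v x) $ i = (\<Sum>j\<in>UNIV. complex_of_real (C $ i $ j) * Matrix.vec_index v (hi j))"
      by (simp add: matrix_vector_mult_def x_def)
    also have "\<dots> = (\<Sum>b\<in>{0..<n}. complex_of_real (C $ i $ h b) * Matrix.vec_index v b)"
      by (simp add: reidx hh)
    also have "\<dots> = Matrix.vec_index (CM *\<^sub>v v) (hi i)"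
      using hi1[of i] v(1) by (simp add: CM_def scalar_prod_def hi2)
    also have "\<dots> = \<mu> * Matrix.vec_index v (hi i)" using v(3) hi1[of i] v(1) by simp
    finally show "((\<chi> i j. complex_of_real (C $ i $ j)) *v x) $ i = (\<mu> *s x) $ i"
      by (simp add: x_def)
  qed
  ultimately have "cmod \<mu> < 1" by (rule ev)
  with sr have "spectral_radius CM < 1" by simp
  from spectral_radius_jnf_norm_bound_less_1_upper_triangular[OF CMc this]
  obtain c where c: "\<And>k. norm_bound (CM ^\<^sub>m k) c" by auto
  show ?thesis
  proof (intro exI allI)
    fix k i j
    have "norm ((CM ^\<^sub>m k) $$ (hi i, hi j)) \<le> c"
      using c[of k] hi1[of i] hi1[of j] unfolding norm_bound_def by (simp add: pow)
    then show "\<bar>mpow C k $ i $ j\<bar> \<le> c"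
      using hi1[of i] hi1[of j] by (simp add: pow hi2)
  qed
qed

hide_const (open) Matrix.mat Matrix.row Matrix.col Matrix.vec


lemma eig_bound:
  fixes B :: "real^'n^'n"
  assumes x0: "x \<noteq> 0" and eq: "(\<chi> i j. complex_of_real (B $ i $ j)) *v x = \<mu> *s x"
  shows "cmod \<mu> \<le> (\<Sum>i\<in>UNIV. \<Sum>j\<in>UNIV. \<bar>B $ i $ j\<bar>)"
proof -
  define m where "m = Max (range (\<lambda>j. cmod (x $ j)))"
  have "m \<in> range (\<lambda>j. cmod (x $ j))" unfolding m_def by (rule Max_in) auto
  then obtain i where i: "cmod (x $ i) = m" by auto
  have ge: "cmod (x $ j) \<le> cmod (x $ i)" for j
    unfolding i m_def by (rule Max_ge) auto
  obtain j0 where "x $ j0 \<noteq> 0" using x0 by (metis Finite_Cartesian_Product.vec_eq_iff zero_index)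
  then have xi: "cmod (x $ i) > 0" using ge[of j0] by (meson norm_le_zero_iff not_le order_trans)
  have "\<mu> * x $ i = (\<Sum>j\<in>UNIV. complex_of_real (B $ i $ j) * x $ j)"
    using arg_cong[OF eq, of "\<lambda>v. v $ i"] by (simp add: matrix_vector_mult_def)
  then have "cmod \<mu> * cmod (x $ i) = cmod (\<Sum>j\<in>UNIV. complex_of_real (B $ i $ j) * x $ j)"
    by (metis norm_mult)
  also have "\<dots> \<le> (\<Sum>j\<in>UNIV. \<bar>B $ i $ j\<bar> * cmod (x $ j))"
    by (rule order_trans[OF norm_sum]) (simp add: norm_mult)
  also have "\<dots> \<le> (\<Sum>j\<in>UNIV. \<bar>B $ i $ j\<bar> * cmod (x $ i))"
    by (intro sum_mono mult_left_mono ge) auto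
  also have "\<dots> = (\<Sum>j\<in>UNIV. \<bar>B $ i $ j\<bar>) * cmod (x $ i)"
    by (simp add: sum_distrib_right)
  finally have "cmod \<mu> \<le> (\<Sum>j\<in>UNIV. \<bar>B $ i $ j\<bar>)"
    using xi by simp
  also have "\<dots> \<le> (\<Sum>i\<in>UNIV. \<Sum>j\<in>UNIV. \<bar>B $ i $ j\<bar>)"
    by (rule member_le_sum) (auto intro: sum_nonneg)
  finally show ?thesis .
qed

lemma specrad_decay:
  fixes B :: "real^'n^'n"
  assumes "spec_rad B < 1"
  shows "\<exists>c r. 0 < r \<and> r < 1 \<and> 0 \<le> c \<and> (\<forall>k i j. \<bar>mpow B k $ i $ j\<bar> \<le> c * r ^ k)"
proof -
  define E where "E = {cmod \<mu> | \<mu>. \<exists>x::complex^'n. x \<noteq> 0 \<and> (\<chi> i j. complex_of_real (B $ i $ j)) *v x = \<mu> *s x}"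
  have sr: "spec_rad B = Sup E" unfolding spec_rad_def E_def ..
  have bdd: "bdd_above E" unfolding E_def bdd_above_def using eig_bound by blast
  define r where "r = (max (spec_rad B) 0 + 1) / 2"
  have r: "0 < r" "r < 1" "spec_rad B < r" using assms unfolding r_def by auto
  define C where "C = (1/r) *\<^sub>R B"
  have "\<exists>c. \<forall>k i j. \<bar>mpow C k $ i $ j\<bar> \<le> c"
  proof (rule jnf_bound)
    fix \<mu> x assume x: "(x::complex^'n) \<noteq> 0" and eq: "(\<chi> i j. complex_of_real (C $ i $ j)) *v x = \<mu> *s x"
    have "(\<chi> i j. complex_of_real (B $ i $ j)) *v x = (complex_of_real r * \<mu>) *s x"
    proof (subst Finite_Cartesian_Product.vec_eq_iff, intro allI)
      fix i
      have "((\<chi> i j. complex_of_real (B $ i $ j)) *v x) $ i = (\<Sum>j\<in>UNIV. complex_of_real (B $ i $ j) * x $ j)"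
        by (simp add: matrix_vector_mult_def)
      also have "\<dots> = complex_of_real r * (\<Sum>j\<in>UNIV. complex_of_real (C $ i $ j) * x $ j)"
        using r(1) by (simp add: sum_distrib_left C_def mult.assoc)
      also have "\<dots> = complex_of_real r * (\<mu> * x $ i)"
        using arg_cong[OF eq, of "\<lambda>v. v $ i"] by (simp add: matrix_vector_mult_def)
      finally show "((\<chi> i j. complex_of_real (B $ i $ j)) *v x) $ i = ((complex_of_real r * \<mu>) *s x) $ i"
        by simp
    qed
    then have "cmod (complex_of_real r * \<mu>) \<in> E" unfolding E_def using x by blast
    then have "cmod (complex_of_real r * \<mu>) \<le> spec_rad B" unfolding sr by (rule cSup_upper[OF _ bdd])
    then have "r * cmod \<mu> \<le> spec_rad B" using r by (simp add: norm_mult)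
    then have "r * cmod \<mu> < r * 1" using r by linarith
    then show "cmod \<mu> < 1" using r(1) by (simp only: mult_less_cancel_left_pos)
  qed
  then obtain c where c: "\<And>k i j. \<bar>mpow C k $ i $ j\<bar> \<le> c" by blast
  have BC: "B = r *\<^sub>R C" unfolding C_def using r by simp
  show ?thesis
  proof (intro exI conjI allI)
    fix k i j
    have "\<bar>mpow B k $ i $ j\<bar> = r ^ k * \<bar>mpow C k $ i $ j\<bar>"
      unfolding BC mpow_scale using r by (simp add: abs_mult)
    also have "\<dots> \<le> r ^ k * max c 0" using c[of k i j] r by (intro mult_left_mono) auto
    finally show "\<bar>mpow B k $ i $ j\<bar> \<le> max c 0 * r ^ k" by (simp add: mult.commute)
  qed (use r in auto)
qed

lemma mat_norm_le: "norm (M::real^'n^'m) \<le> (\<Sum>i\<in>UNIV. \<Sum>j\<in>UNIV. \<bar>M $ i $ j\<bar>)"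
proof -
  have "norm M \<le> (\<Sum>i\<in>UNIV. norm (M $ i))"
    unfolding norm_vec_def by (rule L2_set_le_sum) auto
  also have "\<dots> \<le> (\<Sum>i\<in>UNIV. \<Sum>j\<in>UNIV. \<bar>M $ i $ j\<bar>)"
    by (intro sum_mono norm_le_l1_cart)
  finally show ?thesis .
qed

lemma mat_norm_bound:
  assumes "\<And>i j. \<bar>(M::real^'n^'m) $ i $ j\<bar> \<le> b"
  shows "norm M \<le> real CARD('m) * real CARD('n) * b"
proof -
  have "norm M \<le> (\<Sum>i\<in>(UNIV::'m set). \<Sum>j\<in>(UNIV::'n set). b)"
    using mat_norm_le[of M] assms by (smt (verit) sum_mono)
  then show ?thesis by simp
qed

lemma matrix_sub_rdistrib: "((X::real^'n^'n) - Y) ** M = X ** M - Y ** M"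
  by (simp add: Finite_Cartesian_Product.vec_eq_iff matrix_matrix_mult_def algebra_simps sum_subtractf)

lemma bl_left: "bounded_linear (\<lambda>M::real^'n^'n. X ** M)"
  unfolding linear_conv_bounded_linear[symmetric]
  by (rule linearI) (simp_all add: matrix_add_ldistrib matrix_scalar_ac scalar_matrix_assoc[symmetric])

lemma bl_vec: "bounded_linear (\<lambda>M::real^'n^'n. M *v y)"
  unfolding linear_conv_bounded_linear[symmetric]
  by (rule linearI) (simp_all add: matrix_vector_mult_def Finite_Cartesian_Product.vec_eq_iff
        sum.distrib sum_distrib_left algebra_simps)

lemma neumann:
  fixes B :: "real^'n^'n"
  assumes b: "\<And>k i j. \<bar>mpow B k $ i $ j\<bar> \<le> c * r ^ k" and r: "0 \<le> r" "r < 1"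
  shows "summable (mpow B)" "(mat 1 - B) ** suminf (mpow B) = mat 1"
proof -
  define K where "K = real CARD('n) * real CARD('n) * c"
  have nb: "norm (mpow B k) \<le> K * r ^ k" for k
    using mat_norm_bound[of "mpow B k" "c * r^k", OF b] unfolding K_def by (simp add: mult.assoc)
  have gs: "summable (\<lambda>k. K * r ^ k)" using r by (intro summable_mult summable_geometric) auto
  show sm: "summable (mpow B)"
    by (rule summable_comparison_test'[OF gs]) (use nb in auto)
  have t0: "(\<lambda>k. K * r ^ k) \<longlonglongrightarrow> 0" using r by (intro tendsto_mult_right_zero LIMSEQ_power_zero) auto
  have z: "mpow B \<longlonglongrightarrow> 0"
    by (rule Lim_null_comparison[OF _ t0]) (use nb in auto)
  have tel: "(\<lambda>k. mpow B k - mpow B (Suc k)) sums (mpow B 0 - 0)"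
    by (rule telescope_sums'[OF z])
  have eq: "(mat 1 - B) ** mpow B k = mpow B k - mpow B (Suc k)" for k
    by (simp add: matrix_sub_rdistrib)
  have "(mat 1 - B) ** suminf (mpow B) = (\<Sum>k. (mat 1 - B) ** mpow B k)"
    by (rule bounded_linear.suminf[OF bl_left sm])
  also have "\<dots> = mat 1" using tel unfolding eq by (simp add: sums_iff)
  finally show "(mat 1 - B) ** suminf (mpow B) = mat 1" .
qed

lemma matrix_sub_ldistrib: "(M::real^'n^'n) ** (X - Y) = M ** X - M ** Y"
  by (simp add: Finite_Cartesian_Product.vec_eq_iff matrix_matrix_mult_def algebra_simps sum_subtractf)

lemma matrix_inv_props:
  fixes X :: "real^'n^'n"
  assumes "invertible X"
  shows "X ** matrix_inv X = mat 1" "matrix_inv X ** X = mat 1"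
  using someI_ex[OF assms[unfolded invertible_def]] unfolding matrix_inv_def by auto

lemma matrix_inv_eqI:
  fixes X Y :: "real^'n^'n"
  assumes "Y ** X = mat 1"
  shows "matrix_inv X = Y"
proof -
  have inv: "invertible X" using assms invertible_left_inverse by blast
  have "matrix_inv X = (Y ** X) ** matrix_inv X" using assms by simp
  also have "\<dots> = Y ** (X ** matrix_inv X)" by (simp add: matrix_mul_assoc)
  also have "\<dots> = Y" using matrix_inv_props(1)[OF inv] by simp
  finally show ?thesis .
qed

lemma A_ident:
  fixes W2 :: "real^'n^'n"
  assumes inv: "invertible (mat 1 - lam0 *\<^sub>R W2)"
    and b: "\<And>k i j. \<bar>mpow (lam1 *\<^sub>R Smat lam0 W2) k $ i $ j\<bar> \<le> c * r ^ k" and r: "0 \<le> r" "r < 1"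
  shows "(\<lambda>v. mpow (lam1 *\<^sub>R Smat lam0 W2) v *v (Smat lam0 W2 *v y)) sums (matrix_inv ((1 - lam1) *\<^sub>R mat 1 - lam0 *\<^sub>R W2) *v y)"
proof -
  define S where "S = Smat lam0 W2"
  define B where "B = lam1 *\<^sub>R S"
  define P where "P = suminf (mpow B)"
  have S1: "S ** (mat 1 - lam0 *\<^sub>R W2) = mat 1" unfolding S_def Smat_def using matrix_inv_props(2)[OF inv] .
  have sm: "summable (mpow B)" and PB: "(mat 1 - B) ** P = mat 1"
    using neumann[OF b r] unfolding B_def P_def S_def by auto
  have PB2: "P ** (mat 1 - B) = mat 1" using PB matrix_left_right_inverse by blast
  have Q: "(1 - lam1) *\<^sub>R mat 1 - lam0 *\<^sub>R W2 = (mat 1 - lam0 *\<^sub>R W2) - lam1 *\<^sub>R (mat 1::real^'n^'n)"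
    by (simp add: algebra_simps)
  have Sl: "S ** (lam1 *\<^sub>R mat 1) = lam1 *\<^sub>R S"
    by (simp add: matrix_scalar_ac)
  have SQ: "S ** ((1 - lam1) *\<^sub>R mat 1 - lam0 *\<^sub>R W2) = mat 1 - B"
    unfolding Q B_def by (subst matrix_sub_ldistrib) (simp only: S1 Sl)
  have "(P ** S) ** ((1 - lam1) *\<^sub>R mat 1 - lam0 *\<^sub>R W2) = mat 1"
    by (simp add: matrix_mul_assoc[symmetric] SQ PB2)
  then have Ainv: "matrix_inv ((1 - lam1) *\<^sub>R mat 1 - lam0 *\<^sub>R W2) = P ** S" by (rule matrix_inv_eqI)
  have "(\<lambda>v. mpow B v *v (S *v y)) sums (P *v (S *v y))"
    unfolding P_def using bounded_linear.sums[OF bl_vec summable_sums[OF sm]] by simp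
  then show ?thesis unfolding Ainv B_def S_def by (simp add: matrix_vector_mul_assoc)
qed


lemma vec_borel_measurable:
  fixes f :: "'b \<Rightarrow> real^'n"
  assumes "\<And>i. (\<lambda>x. f x $ i) \<in> borel_measurable N"
  shows "f \<in> borel_measurable N"
  unfolding borel_measurable_euclidean_space[where f=f]
  using assms by (auto simp: Basis_vec_def inner_axis)

lemma (in prob_space) indep_sets_reindex:
  assumes ind: "indep_sets F (g ` I)" and inj: "inj_on g I"
  shows "indep_sets (\<lambda>i. F (g i)) I"
proof (rule indep_setsI)
  fix i assume "i \<in> I" then show "F (g i) \<subseteq> events" using ind unfolding indep_sets_def by auto
next
  fix A J assume J: "J \<noteq> {}" "J \<subseteq> I" "finite J" "\<forall>j\<in>J. A j \<in> F (g j)"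
  define A' where "A' k = A (the_inv_into I g k)" for k
  have A'g: "j \<in> J \<Longrightarrow> A' (g j) = A j" for j using inj J by (auto simp: A'_def the_inv_into_f_f)
  have "prob (\<Inter>k\<in>g`J. A' k) = (\<Prod>k\<in>g`J. prob (A' k))"
    by (rule indep_setsD[OF ind]) (use J A'g in auto)
  moreover have "(\<Inter>k\<in>g`J. A' k) = (\<Inter>j\<in>J. A j)" using A'g by auto
  moreover have "(\<Prod>k\<in>g`J. prob (A' k)) = (\<Prod>j\<in>J. prob (A j))"
    using inj J by (subst prod.reindex) (auto intro: inj_on_subset simp: A'g)
  ultimately show "prob (\<Inter>j\<in>J. A j) = (\<Prod>j\<in>J. prob (A j))" by simp
qed

lemma (in prob_space) indep_vars_reindex:
  assumes ind: "indep_vars M' X (g ` I)" and inj: "inj_on g I"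
  shows "indep_vars (\<lambda>i. M' (g i)) (\<lambda>i. X (g i)) I"
  using ind unfolding indep_vars_def2
  using indep_sets_reindex[OF _ inj, of "\<lambda>i. {X i -` A \<inter> space M |A. A \<in> sets (M' i)}"] by auto

lemma (in prob_space) indep_vars_vec:
  fixes X :: "'i \<times> 'n::finite \<Rightarrow> 'a \<Rightarrow> real"
  assumes "indep_vars (\<lambda>_. borel) X UNIV"
  shows "indep_vars (\<lambda>_. borel) (\<lambda>s \<omega>. (\<chi> i. X (s,i) \<omega>) :: real^'n) UNIV"
proof -
  have "indep_vars (\<lambda>s. PiM ({s}\<times>UNIV) (\<lambda>_. borel)) (\<lambda>s \<omega>. restrict (\<lambda>k. X k \<omega>) ({s}\<times>UNIV)) UNIV"
    by (rule indep_vars_restrict[OF assms]) (auto simp: disjoint_family_on_def)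
  then have "indep_vars (\<lambda>_. borel) (\<lambda>s \<omega>. (\<lambda>x. (\<chi> i. x (s,i)) :: real^'n) (restrict (\<lambda>k. X k \<omega>) ({s}\<times>UNIV))) UNIV"
  proof (rule indep_vars_compose2)
    fix s :: 'i
    show "(\<lambda>x. (\<chi> i. x (s,i)) :: real^'n) \<in> measurable (PiM ({s}\<times>UNIV) (\<lambda>_. borel)) borel"
      by (rule vec_borel_measurable) simp
  qed
  then show ?thesis by simp
qed

locale eps_model = prob_space M for M :: "'a measure" +
  fixes eps :: "int \<Rightarrow> 'a \<Rightarrow> real^'n::finite"
  assumes indep: "indep_vars (\<lambda>_. borel) (\<lambda>(t, i) \<omega>. eps t \<omega> $ i) UNIV"
    and normal: "\<And>t i. distributed M lborel (\<lambda>\<omega>. eps t \<omega> $ i) std_normal_density"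
begin

lemma meas_comp[measurable]: "(\<lambda>\<omega>. eps t \<omega> $ i) \<in> borel_measurable M"
  using distributed_measurable[OF normal[of t i]] by simp

lemma meas_eps[measurable]: "eps t \<in> borel_measurable M"
  by (rule vec_borel_measurable) simp

lemma indep_eps: "indep_vars (\<lambda>_. borel) eps UNIV"
  using indep_vars_vec[OF indep] by simp

lemma indep_fun:
  assumes inj: "inj \<sigma>" and f: "\<And>k. f k \<in> borel_measurable borel"
  shows "indep_vars (\<lambda>_. borel) (\<lambda>k \<omega>. (f k (eps (\<sigma> k) \<omega>) :: real)) UNIV"
proof -
  have "indep_vars (\<lambda>_. borel) (\<lambda>k. eps (\<sigma> k)) UNIV"
    using indep_vars_reindex[of "\<lambda>_. borel" eps \<sigma> UNIV] indep_vars_subset[OF indep_eps] inj by auto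
  then show ?thesis by (rule indep_vars_compose2) (use f in auto)
qed

definition Nm :: "real measure" where "Nm = density lborel std_normal_density"

lemma distr_comp: "distr M borel (\<lambda>\<omega>. eps t \<omega> $ i) = Nm"
proof -
  have "distr M borel (\<lambda>\<omega>. eps t \<omega> $ i) = distr M lborel (\<lambda>\<omega>. eps t \<omega> $ i)"
    by (rule distr_cong) auto
  also have "\<dots> = Nm" unfolding Nm_def by (rule distributed_distr_eq_density[OF normal])
  finally show ?thesis .
qed

lemma distr_vec: "distr M borel (eps t) = distr (PiM UNIV (\<lambda>_::'n. Nm)) borel (\<lambda>x. \<chi> i. x i)"
proof -
  have ind: "indep_vars (\<lambda>_. borel) (\<lambda>i \<omega>. eps t \<omega> $ i) (UNIV::'n set)"
    using indep_vars_reindex[of "\<lambda>_. borel" "\<lambda>(t, i) \<omega>. eps t \<omega> $ i" "Pair t" UNIV]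
      indep_vars_subset[OF indep, of "range (Pair t)"] by (simp add: inj_on_def)
  have PiD: "distr M (PiM UNIV (\<lambda>_. borel)) (\<lambda>\<omega>. \<lambda>i\<in>UNIV. eps t \<omega> $ i) = PiM UNIV (\<lambda>_::'n. Nm)"
    using indep_vars_iff_distr_eq_PiM[of "UNIV::'n set" "\<lambda>i \<omega>. eps t \<omega> $ i" "\<lambda>_. borel"] ind
    by (simp add: distr_comp)
  have vm: "(\<lambda>x. (\<chi> i. x i) :: real^'n) \<in> measurable (PiM UNIV (\<lambda>_::'n. borel)) borel"
    by (rule vec_borel_measurable) simp
  have mr: "(\<lambda>\<omega>. \<lambda>i\<in>UNIV. eps t \<omega> $ i) \<in> measurable M (PiM UNIV (\<lambda>_::'n. borel))"
    by measurable
  have e: "eps t = (\<lambda>x. (\<chi> i. x i) :: real^'n) \<circ> (\<lambda>\<omega>. \<lambda>i\<in>UNIV. eps t \<omega> $ i)"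
    by (simp add: fun_eq_iff comp_def restrict_def vec_nth_inverse)
  have "distr M borel (eps t) = distr (distr M (PiM UNIV (\<lambda>_. borel)) (\<lambda>\<omega>. \<lambda>i\<in>UNIV. eps t \<omega> $ i)) borel (\<lambda>x. \<chi> i. x i)"
    by (subst e) (simp only: distr_distr[OF vm mr])
  also have "\<dots> = distr (PiM UNIV (\<lambda>_::'n. Nm)) borel (\<lambda>x. \<chi> i. x i)" unfolding PiD ..
  finally show ?thesis .
qed

lemma distr_eq: "distr M borel (eps t) = distr M borel (eps s)"
  unfolding distr_vec ..

lemma integral_eq:
  fixes f :: "real^'n \<Rightarrow> real"
  assumes [measurable]: "f \<in> borel_measurable borel"
  shows "integral\<^sup>L M (\<lambda>\<omega>. f (eps t \<omega>)) = integral\<^sup>L M (\<lambda>\<omega>. f (eps s \<omega>))"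
  using integral_distr[OF meas_eps[of t] assms] integral_distr[OF meas_eps[of s] assms] distr_eq[of t s]
  by simp

lemma integrable_eq:
  fixes f :: "real^'n \<Rightarrow> real"
  assumes [measurable]: "f \<in> borel_measurable borel"
  shows "integrable M (\<lambda>\<omega>. f (eps t \<omega>)) \<longleftrightarrow> integrable M (\<lambda>\<omega>. f (eps s \<omega>))"
  using integrable_distr_eq[OF meas_eps[of t] assms] integrable_distr_eq[OF meas_eps[of s] assms] distr_eq[of t s]
  by simp

end


definition nrm :: "real^'n \<Rightarrow> real" where "nrm z = (\<Sum>i\<in>UNIV. \<bar>z $ i\<bar>)"

lemma nrm_nonneg: "0 \<le> nrm z" unfolding nrm_def by (auto intro: sum_nonneg)

lemma comp_le_nrm: "\<bar>z $ i\<bar> \<le> nrm z"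
  unfolding nrm_def by (rule member_le_sum) auto

lemma nrm_meas[measurable]: "nrm \<in> borel_measurable borel"
  unfolding nrm_def by measurable

lemma std_exp_shift: "std_normal_density x * exp (c * x) = exp (c\<^sup>2 / 2) * normal_density c 1 x"
proof -
  have "- x\<^sup>2 / 2 + c * x = c\<^sup>2 / 2 + (- (x - c)\<^sup>2 / 2)" by (simp add: power2_eq_square field_simps)
  then show ?thesis
    by (simp add: normal_density_def exp_add[symmetric] mult.commute mult.left_commute)
qed

lemma gauss_int: "integrable lborel (\<lambda>x. std_normal_density x * exp (b * \<bar>x\<bar>))"
proof (rule Bochner_Integration.integrable_bound)
  let ?c = "\<bar>b\<bar>"
  show "integrable lborel (\<lambda>x. exp (?c\<^sup>2 / 2) * normal_density ?c 1 x + exp ((-?c)\<^sup>2 / 2) * normal_density (-?c) 1 x)"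
    by (intro Bochner_Integration.integrable_add integrable_mult_right integrable_normal_density) simp_all
  show "(\<lambda>x. std_normal_density x * exp (b * \<bar>x\<bar>)) \<in> borel_measurable lborel" by measurable
  show "AE x in lborel. norm (std_normal_density x * exp (b * \<bar>x\<bar>)) \<le>
      norm (exp (?c\<^sup>2 / 2) * normal_density ?c 1 x + exp ((-?c)\<^sup>2 / 2) * normal_density (-?c) 1 x)"
  proof (intro AE_I2)
    fix x
    have e: "exp (b * \<bar>x\<bar>) \<le> exp (?c * x) + exp ((-?c) * x)"
    proof -
      have "b * \<bar>x\<bar> \<le> ?c * x \<or> b * \<bar>x\<bar> \<le> (-?c) * x"
        by (cases "x \<ge> 0"; cases "b \<ge> 0") (auto simp: mult_le_cancel_right)
      then show ?thesis by (smt (verit) exp_gt_zero exp_le_cancel_iff)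
    qed
    have "std_normal_density x * exp (b * \<bar>x\<bar>) \<le> std_normal_density x * (exp (?c * x) + exp ((-?c) * x))"
      by (rule mult_left_mono[OF e]) simp
    also have "\<dots> = exp (?c\<^sup>2 / 2) * normal_density ?c 1 x + exp ((-?c)\<^sup>2 / 2) * normal_density (-?c) 1 x"
      unfolding distrib_left std_exp_shift ..
    finally show "norm (std_normal_density x * exp (b * \<bar>x\<bar>)) \<le>
      norm (exp (?c\<^sup>2 / 2) * normal_density ?c 1 x + exp ((-?c)\<^sup>2 / 2) * normal_density (-?c) 1 x)"
      by simp
  qed
qed

lemma exp_nrm_le: 
  assumes "0 \<le> a"
  shows "exp (a * nrm (z::real^'n)) \<le> (\<Sum>i\<in>UNIV. exp (a * real CARD('n) * \<bar>z $ i\<bar>))"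
proof -
  define m where "m = Max (range (\<lambda>j. \<bar>z $ j\<bar>))"
  have "m \<in> range (\<lambda>j. \<bar>z $ j\<bar>)" unfolding m_def by (rule Max_in) auto
  then obtain i where i: "\<bar>z $ i\<bar> = m" by auto
  have ge: "\<bar>z $ j\<bar> \<le> \<bar>z $ i\<bar>" for j unfolding i m_def by (rule Max_ge) auto
  have "nrm z \<le> real CARD('n) * \<bar>z $ i\<bar>"
    unfolding nrm_def using sum_bounded_above[of UNIV "\<lambda>j. \<bar>z $ j\<bar>" "\<bar>z $ i\<bar>"] ge by simp
  then have "exp (a * nrm z) \<le> exp (a * real CARD('n) * \<bar>z $ i\<bar>)"
    using assms by (simp add: mult_left_mono mult.assoc)
  also have "\<dots> \<le> (\<Sum>i\<in>UNIV. exp (a * real CARD('n) * \<bar>z $ i\<bar>))"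
    by (rule member_le_sum) auto
  finally show ?thesis .
qed

context eps_model
begin

lemma gauss_comp: "integrable M (\<lambda>\<omega>. exp (b * \<bar>eps t \<omega> $ i\<bar>))"
  using distributed_integrable[OF normal[of t i], of "\<lambda>x. exp (b * \<bar>x\<bar>)"] gauss_int[of b] by simp

lemma gauss_nrm:
  assumes "0 \<le> a"
  shows "integrable M (\<lambda>\<omega>. exp (a * nrm (eps t \<omega>)))"
proof (rule Bochner_Integration.integrable_bound)
  show "integrable M (\<lambda>\<omega>. \<Sum>i\<in>UNIV. exp (a * real CARD('n) * \<bar>eps t \<omega> $ i\<bar>))"
    by (intro Bochner_Integration.integrable_sum gauss_comp)
  show "(\<lambda>\<omega>. exp (a * nrm (eps t \<omega>))) \<in> borel_measurable M" by measurable
  show "AE \<omega> in M. norm (exp (a * nrm (eps t \<omega>))) \<le> norm (\<Sum>i\<in>UNIV. exp (a * real CARD('n) * \<bar>eps t \<omega> $ i\<bar>))"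
    using exp_nrm_le[OF assms] by (auto intro!: AE_I2 order_trans[OF _ abs_ge_self])
qed

lemma int_bound:
  fixes f :: "real^'n \<Rightarrow> real"
  assumes [measurable]: "f \<in> borel_measurable borel" and a: "0 \<le> a"
    and b: "\<And>z. \<bar>f z\<bar> \<le> C * exp (a * nrm z)"
  shows "integrable M (\<lambda>\<omega>. f (eps t \<omega>))"
proof (rule Bochner_Integration.integrable_bound)
  show "integrable M (\<lambda>\<omega>. C * exp (a * nrm (eps t \<omega>)))"
    by (intro integrable_mult_right gauss_nrm a)
  show "(\<lambda>\<omega>. f (eps t \<omega>)) \<in> borel_measurable M" by measurable
  show "AE \<omega> in M. norm (f (eps t \<omega>)) \<le> norm (C * exp (a * nrm (eps t \<omega>)))"
    using b by (auto intro!: AE_I2 order_trans[OF _ abs_ge_self])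
qed

lemma int_1nrm: "integrable M (\<lambda>\<omega>. 1 + nrm (eps t \<omega>))"
  by (rule int_bound[where a=1 and C=1]) (auto simp: nrm_nonneg intro: order_trans[OF _ exp_ge_add_one_self])

lemma AE_summable:
  assumes r: "0 \<le> r" "r < 1"
  shows "AE \<omega> in M. summable (\<lambda>k. r ^ k * (1 + nrm (eps (\<sigma> k) \<omega>)))"
proof -
  define c1 where "c1 = expectation (\<lambda>\<omega>. 1 + nrm (eps 1 \<omega>))"
  have c1: "0 \<le> c1" unfolding c1_def by (intro integral_nonneg_AE) (auto simp: nrm_nonneg intro!: AE_I2 add_nonneg_nonneg)
  have each: "(\<integral>\<^sup>+\<omega>. ennreal (r ^ k * (1 + nrm (eps (\<sigma> k) \<omega>))) \<partial>M) = ennreal (r ^ k * c1)" for k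
  proof -
    have "(\<integral>\<^sup>+\<omega>. ennreal (r ^ k * (1 + nrm (eps (\<sigma> k) \<omega>))) \<partial>M) = ennreal (expectation (\<lambda>\<omega>. r ^ k * (1 + nrm (eps (\<sigma> k) \<omega>))))"
      by (rule nn_integral_eq_integral) (use r int_1nrm in \<open>auto simp: nrm_nonneg intro!: AE_I2 add_nonneg_nonneg\<close>)
    also have "expectation (\<lambda>\<omega>. r ^ k * (1 + nrm (eps (\<sigma> k) \<omega>))) = r ^ k * c1"
      unfolding c1_def using integral_eq[of "\<lambda>z. 1 + nrm z" "\<sigma> k" 1] by simp
    finally show ?thesis .
  qed
  have "(\<integral>\<^sup>+\<omega>. (\<Sum>k. ennreal (r ^ k * (1 + nrm (eps (\<sigma> k) \<omega>)))) \<partial>M) = (\<Sum>k. ennreal (r ^ k * c1))"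
    by (subst nn_integral_suminf) (auto simp: each)
  also have "\<dots> = ennreal (\<Sum>k. r ^ k * c1)"
    using r c1 by (intro suminf_ennreal2) (auto intro: summable_mult2 summable_geometric)
  finally have "(\<integral>\<^sup>+\<omega>. (\<Sum>k. ennreal (r ^ k * (1 + nrm (eps (\<sigma> k) \<omega>)))) \<partial>M) \<noteq> \<infinity>" by simp
  from nn_integral_PInf_AE[OF _ this]
  have "AE \<omega> in M. (\<Sum>k. ennreal (r ^ k * (1 + nrm (eps (\<sigma> k) \<omega>)))) \<noteq> \<infinity>" by measurable
  then show ?thesis
  proof (rule AE_mp, intro AE_I2 impI)
    fix \<omega> assume "(\<Sum>k. ennreal (r ^ k * (1 + nrm (eps (\<sigma> k) \<omega>)))) \<noteq> \<infinity>"
    then show "summable (\<lambda>k. r ^ k * (1 + nrm (eps (\<sigma> k) \<omega>)))"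
      by (intro summable_suminf_not_top) (use r in \<open>auto simp: nrm_nonneg intro!: add_nonneg_nonneg\<close>)
  qed
qed

end


lemma ge1_mult: "1 \<le> (x::real) \<Longrightarrow> 1 \<le> y \<Longrightarrow> 1 \<le> x * y"
  using mult_mono[of 1 x 1 y] by simp

lemma prod_1plus_le:
  assumes "\<And>k. 0 \<le> (u::nat \<Rightarrow> real) k" "summable u"
  shows "(\<Prod>k<K. 1 + u k) \<le> exp (suminf u)"
proof -
  have "(\<Prod>k<K. 1 + u k) \<le> (\<Prod>k<K. exp (u k))"
    by (intro prod_mono) (use assms(1) in \<open>auto simp: add.commute intro: order_trans[OF _ exp_ge_add_one_self] add_nonneg_nonneg\<close>)
  also have "\<dots> = exp (\<Sum>k<K. u k)" by (simp add: exp_sum)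
  also have "\<dots> \<le> exp (suminf u)" using sum_le_suminf[OF assms(2), of "{..<K}"] assms(1) by auto
  finally show ?thesis .
qed

lemma exp_small:
  assumes "0 \<le> t" "t \<le> 1" "0 \<le> (y::real)"
  shows "exp (t * y) \<le> 1 + t * (y * exp y)"
proof -
  have "1 - t * y \<le> exp (- (t * y))" using exp_ge_add_one_self[of "- (t*y)"] by simp
  then have "exp (t * y) * (1 - t * y) \<le> exp (t * y) * exp (- (t * y))" by (intro mult_left_mono) auto
  then have "exp (t * y) \<le> 1 + t * y * exp (t * y)" by (simp add: exp_minus field_simps)
  also have "t * y * exp (t * y) \<le> t * y * exp y"
    using assms by (intro mult_left_mono) (auto simp: mult_le_cancel_right1 mult_left_le_one_le)
  finally show ?thesis by (simp add: mult.assoc)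
qed

context eps_model
begin

lemma core:
  fixes P e :: "nat \<Rightarrow> real^'n \<Rightarrow> real" and \<sigma> :: "nat \<Rightarrow> int"
  assumes inj: "inj \<sigma>"
    and Pm[measurable]: "\<And>k. P k \<in> borel_measurable borel"
    and em[measurable]: "\<And>k. e k \<in> borel_measurable borel"
    and Pb: "\<And>k z. \<bar>P k z\<bar> \<le> (1 + nrm z) ^ p"
    and P1: "\<And>k z. H0 \<le> k \<Longrightarrow> P k z = 1"
    and eb: "\<And>k z. \<bar>e k z\<bar> \<le> a * r ^ k * (1 + nrm z)"
    and a: "0 \<le> a" and r: "0 \<le> r" "r < 1"
  shows "integrable M (\<lambda>\<omega>. (\<Prod>k<H0. P k (eps (\<sigma> k) \<omega>)) * exp (\<Sum>k. e k (eps (\<sigma> k) \<omega>)))"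
    and "(\<lambda>K. \<Prod>k<K. expectation (\<lambda>\<omega>. P k (eps 1 \<omega>) * exp (e k (eps 1 \<omega>))))
           \<longlonglongrightarrow> expectation (\<lambda>\<omega>. (\<Prod>k<H0. P k (eps (\<sigma> k) \<omega>)) * exp (\<Sum>k. e k (eps (\<sigma> k) \<omega>)))"
proof -
  define \<phi> where "\<phi> k z = P k z * exp (e k z)" for k z
  define \<psi> where "\<psi> k z = (if k < H0 then 1 + (1 + nrm z) ^ p else 1) * exp (a * r ^ k * (1 + nrm z))"
    for k and z :: "real^'n"
  define \<Phi> where "\<Phi> \<omega> = (\<Prod>k<H0. P k (eps (\<sigma> k) \<omega>)) * exp (\<Sum>k. e k (eps (\<sigma> k) \<omega>))" for \<omega>
  define \<Phi>K where "\<Phi>K K \<omega> = (\<Prod>k<K. \<phi> k (eps (\<sigma> k) \<omega>))" for K \<omega>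
  define \<Psi>K where "\<Psi>K K \<omega> = (\<Prod>k<K. \<psi> k (eps (\<sigma> k) \<omega>))" for K \<omega>
  define \<Psi> where "\<Psi> \<omega> = (\<Prod>k<H0. 1 + (1 + nrm (eps (\<sigma> k) \<omega>)) ^ p) *
      exp (a * (\<Sum>k. r ^ k * (1 + nrm (eps (\<sigma> k) \<omega>))))" for \<omega>
  have \<phi>m[measurable]: "\<phi> k \<in> borel_measurable borel" for k unfolding \<phi>_def by measurable
  have \<psi>m[measurable]: "\<psi> k \<in> borel_measurable borel" for k unfolding \<psi>_def by measurable
  have rk: "r ^ k \<le> 1" for k using r by (simp add: power_le_one)
  have \<psi>1: "1 \<le> \<psi> k z" for k z
  proof -
    have "1 \<le> (if k < H0 then 1 + (1 + nrm z) ^ p else 1)" using nrm_nonneg[of z] by auto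
    moreover have "1 \<le> exp (a * r ^ k * (1 + nrm z))" using a r nrm_nonneg[of z] by auto
    ultimately show ?thesis unfolding \<psi>_def by (rule ge1_mult)
  qed
  have \<phi>\<psi>: "\<bar>\<phi> k z\<bar> \<le> \<psi> k z" for k z
  proof -
    have "\<bar>P k z\<bar> \<le> (if k < H0 then 1 + (1 + nrm z) ^ p else 1)"
      using Pb[of k z] P1[of k z] by auto
    moreover have "exp (e k z) \<le> exp (a * r ^ k * (1 + nrm z))"
      using eb[of k z] by auto
    ultimately show ?thesis unfolding \<phi>_def \<psi>_def abs_mult
      by (intro mult_mono) auto
  qed
  have \<psi>b: "\<bar>\<psi> k z\<bar> \<le> 2 * exp a * exp ((real p + a) * nrm z)" for k z
  proof -
    have N: "0 \<le> nrm z" by (rule nrm_nonneg)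
    have "(1 + nrm z) ^ p \<le> exp (nrm z) ^ p"
      by (intro power_mono) (use N in \<open>auto simp: add.commute intro: exp_ge_add_one_self\<close>)
    also have "\<dots> = exp (real p * nrm z)" by (simp add: exp_of_nat_mult)
    finally have f0: "(1 + nrm z) ^ p \<le> exp (real p * nrm z)" .
    have f1: "(if k < H0 then 1 + (1 + nrm z) ^ p else 1) \<le> 2 * exp (real p * nrm z)"
    proof -
      have e1: "1 \<le> exp (real p * nrm z)" using N by simp
      show ?thesis
      proof (cases "k < H0")
        case True
        show ?thesis unfolding if_P[OF True] using f0 e1 by linarith
      next
        case False
        show ?thesis unfolding if_not_P[OF False] using e1 by linarith
      qed
    qed
    have f2: "exp (a * r ^ k * (1 + nrm z)) \<le> exp a * exp (a * nrm z)"
    proof -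
      have "a * r ^ k * (1 + nrm z) \<le> a * (1 + nrm z)"
        using a N rk[of k] by (intro mult_right_mono) (auto simp: mult_left_le)
      then show ?thesis by (simp add: exp_add[symmetric] distrib_left)
    qed
    have "\<bar>\<psi> k z\<bar> = \<psi> k z" using \<psi>1[of k z] by simp
    also have "\<dots> \<le> (2 * exp (real p * nrm z)) * (exp a * exp (a * nrm z))"
      unfolding \<psi>_def by (intro mult_mono f1 f2) auto
    also have "\<dots> = 2 * exp a * exp ((real p + a) * nrm z)"
    proof -
      have "exp ((real p + a) * nrm z) = exp (real p * nrm z) * exp (a * nrm z)"
        by (simp add: distrib_right exp_add)
      then show ?thesis by simp
    qed
    finally show ?thesis .
  qed
  have pa: "0 \<le> real p + a" using a by simp
  have int\<psi>: "integrable M (\<lambda>\<omega>. \<psi> k (eps s \<omega>))" for k s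
    by (rule int_bound[OF \<psi>m pa \<psi>b])
  have int\<phi>: "integrable M (\<lambda>\<omega>. \<phi> k (eps s \<omega>))" for k s
    by (rule int_bound[OF \<phi>m pa]) (rule order_trans[OF \<phi>\<psi> order_trans[OF abs_ge_self \<psi>b]])
  have ind\<psi>: "indep_vars (\<lambda>_. borel) (\<lambda>k \<omega>. \<psi> k (eps (\<sigma> k) \<omega>)) {..<K}" for K
    by (rule indep_vars_subset[OF indep_fun[OF inj \<psi>m]]) simp
  have ind\<phi>: "indep_vars (\<lambda>_. borel) (\<lambda>k \<omega>. \<phi> k (eps (\<sigma> k) \<omega>)) {..<K}" for K
    by (rule indep_vars_subset[OF indep_fun[OF inj \<phi>m]]) simp
  have int\<Psi>K: "integrable M (\<Psi>K K)" for K
    unfolding \<Psi>K_def by (rule indep_vars_integrable[OF _ ind\<psi> int\<psi>]) simp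
  have E\<Psi>K: "expectation (\<Psi>K K) = (\<Prod>k<K. expectation (\<lambda>\<omega>. \<psi> k (eps 1 \<omega>)))" for K
  proof -
    have "expectation (\<Psi>K K) = (\<Prod>k<K. expectation (\<lambda>\<omega>. \<psi> k (eps (\<sigma> k) \<omega>)))"
      unfolding \<Psi>K_def by (rule indep_vars_lebesgue_integral[OF _ ind\<psi> int\<psi>]) simp
    also have "\<dots> = (\<Prod>k<K. expectation (\<lambda>\<omega>. \<psi> k (eps 1 \<omega>)))"
      by (intro prod.cong refl integral_eq \<psi>m)
    finally show ?thesis .
  qed
  have E\<Phi>K: "expectation (\<Phi>K K) = (\<Prod>k<K. expectation (\<lambda>\<omega>. \<phi> k (eps 1 \<omega>)))" for K
  proof -
    have "expectation (\<Phi>K K) = (\<Prod>k<K. expectation (\<lambda>\<omega>. \<phi> k (eps (\<sigma> k) \<omega>)))"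
      unfolding \<Phi>K_def by (rule indep_vars_lebesgue_integral[OF _ ind\<phi> int\<phi>]) simp
    also have "\<dots> = (\<Prod>k<K. expectation (\<lambda>\<omega>. \<phi> k (eps 1 \<omega>)))"
      by (intro prod.cong refl integral_eq \<phi>m)
    finally show ?thesis .
  qed
  define u where "u k = expectation (\<lambda>\<omega>. \<psi> k (eps 1 \<omega>)) - 1" for k
  have u0: "0 \<le> u k" for k
  proof -
    have "expectation (\<lambda>\<omega>. 1) \<le> expectation (\<lambda>\<omega>. \<psi> k (eps 1 \<omega>))"
      by (intro integral_mono int\<psi>) (auto simp: \<psi>1)
    then show ?thesis unfolding u_def by (simp add: prob_space)
  qed
  define g where "g z = a * (1 + nrm z) * exp (a * (1 + nrm z))" for z :: "real^'n"
  define D where "D = expectation (\<lambda>\<omega>. g (eps 1 \<omega>))"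
  have gm[measurable]: "g \<in> borel_measurable borel" unfolding g_def by measurable
  have intg: "integrable M (\<lambda>\<omega>. g (eps 1 \<omega>))"
  proof (rule int_bound[OF gm, where a="2*a" and C="exp (2*a)"])
    fix z :: "real^'n"
    have y: "0 \<le> a * (1 + nrm z)" using a nrm_nonneg[of z] by simp
    have "\<bar>g z\<bar> = a * (1 + nrm z) * exp (a * (1 + nrm z))" unfolding g_def using y by simp
    also have "\<dots> \<le> exp (a * (1 + nrm z)) * exp (a * (1 + nrm z))"
      by (intro mult_right_mono) (auto simp: add.commute intro: order_trans[OF _ exp_ge_add_one_self])
    also have "\<dots> = exp (a * (1 + nrm z) + a * (1 + nrm z))" by (rule exp_add[symmetric])
    also have "\<dots> = exp (2 * a + 2 * a * nrm z)" by (rule arg_cong[where f=exp]) (simp add: algebra_simps)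
    also have "\<dots> = exp (2 * a) * exp (2 * a * nrm z)" by (rule exp_add)
    finally show "\<bar>g z\<bar> \<le> exp (2 * a) * exp (2 * a * nrm z)" .
  qed (use a in simp)
  have uD: "u k \<le> r ^ k * D" if "H0 \<le> k" for k
  proof -
    have pt: "\<psi> k z \<le> 1 + r ^ k * g z" for z
    proof -
      have "\<psi> k z = exp (r ^ k * (a * (1 + nrm z)))" unfolding \<psi>_def using that by (simp add: mult_ac)
      also have "\<dots> \<le> 1 + r ^ k * (a * (1 + nrm z) * exp (a * (1 + nrm z)))"
        by (rule exp_small) (use r rk a nrm_nonneg[of z] in auto)
      finally show ?thesis unfolding g_def .
    qed
    have "expectation (\<lambda>\<omega>. \<psi> k (eps 1 \<omega>)) \<le> expectation (\<lambda>\<omega>. 1 + r ^ k * g (eps 1 \<omega>))"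
      by (intro integral_mono int\<psi> pt Bochner_Integration.integrable_add integrable_mult_right intg) auto
    also have "\<dots> = 1 + r ^ k * D"
      unfolding D_def using intg by (simp add: Bochner_Integration.integral_add prob_space)
    finally show ?thesis unfolding u_def by simp
  qed
  have usum: "summable u"
  proof (rule summable_comparison_test'[where N=H0])
    show "summable (\<lambda>k. r ^ k * D)" using r by (intro summable_mult2 summable_geometric) auto
    show "norm (u k) \<le> r ^ k * D" if "H0 \<le> k" for k using uD[OF that] u0[of k] by simp
  qed
  have E\<Psi>b: "expectation (\<Psi>K K) \<le> exp (suminf u)" for K
    unfolding E\<Psi>K using prod_1plus_le[OF u0 usum, of K] by (simp add: u_def)
  have \<Psi>K0: "0 \<le> \<Psi>K K \<omega>" for K \<omega>
    unfolding \<Psi>K_def by (intro prod_nonneg) (auto intro: order_trans[OF zero_le_one \<psi>1])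
  have \<Psi>K_inc: "\<Psi>K K \<omega> \<le> \<Psi>K (Suc K) \<omega>" for K \<omega>
  proof -
    have "\<Psi>K K \<omega> * 1 \<le> \<Psi>K K \<omega> * \<psi> K (eps (\<sigma> K) \<omega>)"
      by (intro mult_left_mono \<psi>1 \<Psi>K0)
    then show ?thesis unfolding \<Psi>K_def by (simp add: mult.commute)
  qed
  have AS: "AE \<omega> in M. summable (\<lambda>k. r ^ k * (1 + nrm (eps (\<sigma> k) \<omega>)))"
    by (rule AE_summable[OF r])
  have conv: "(\<lambda>K. \<Psi>K K \<omega>) \<longlonglongrightarrow> \<Psi> \<omega> \<and> (\<lambda>K. \<Phi>K K \<omega>) \<longlonglongrightarrow> \<Phi> \<omega>"
    if sm: "summable (\<lambda>k. r ^ k * (1 + nrm (eps (\<sigma> k) \<omega>)))" for \<omega>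
  proof
    define c where "c k = (if k < H0 then 1 + (1 + nrm (eps (\<sigma> k) \<omega>)) ^ p else 1)" for k
    have eq1: "\<Psi>K K \<omega> = (\<Prod>k<K. c k) * exp (a * (\<Sum>k<K. r ^ k * (1 + nrm (eps (\<sigma> k) \<omega>))))" for K
      unfolding \<Psi>K_def \<psi>_def c_def
      by (simp add: prod.distrib exp_sum sum_distrib_left mult.assoc)
    have eq2: "(\<Prod>k<K. c k) = (\<Prod>k<H0. 1 + (1 + nrm (eps (\<sigma> k) \<omega>)) ^ p)" if "H0 \<le> K" for K
    proof -
      have "(\<Prod>k<K. c k) = (\<Prod>k<H0. c k)"
        by (rule prod.mono_neutral_right) (use that in \<open>auto simp: c_def\<close>)
      also have "\<dots> = (\<Prod>k<H0. 1 + (1 + nrm (eps (\<sigma> k) \<omega>)) ^ p)" by (simp add: c_def)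
      finally show ?thesis .
    qed
    have lim1: "(\<lambda>K. (\<Prod>k<H0. 1 + (1 + nrm (eps (\<sigma> k) \<omega>)) ^ p) * exp (a * (\<Sum>k<K. r ^ k * (1 + nrm (eps (\<sigma> k) \<omega>)))))
        \<longlonglongrightarrow> \<Psi> \<omega>"
      unfolding \<Psi>_def by (intro tendsto_intros summable_LIMSEQ sm)
    show "(\<lambda>K. \<Psi>K K \<omega>) \<longlonglongrightarrow> \<Psi> \<omega>"
      by (rule Lim_transform_eventually[OF lim1]) (unfold eventually_sequentially, rule exI[of _ H0], simp add: eq1 eq2)
    have sme: "summable (\<lambda>k. e k (eps (\<sigma> k) \<omega>))"
    proof (rule summable_comparison_test'[where N=0])
      show "summable (\<lambda>k. a * (r ^ k * (1 + nrm (eps (\<sigma> k) \<omega>))))" by (rule summable_mult[OF sm])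
      show "norm (e k (eps (\<sigma> k) \<omega>)) \<le> a * (r ^ k * (1 + nrm (eps (\<sigma> k) \<omega>)))" for k
        using eb[of k "eps (\<sigma> k) \<omega>"] by (simp add: mult.assoc)
    qed
    have eq3: "\<Phi>K K \<omega> = (\<Prod>k<K. P k (eps (\<sigma> k) \<omega>)) * exp (\<Sum>k<K. e k (eps (\<sigma> k) \<omega>))" for K
      unfolding \<Phi>K_def \<phi>_def by (simp add: prod.distrib exp_sum)
    have eq4: "(\<Prod>k<K. P k (eps (\<sigma> k) \<omega>)) = (\<Prod>k<H0. P k (eps (\<sigma> k) \<omega>))" if "H0 \<le> K" for K
      by (rule prod.mono_neutral_right) (use that P1 in auto)
    have eq34: "\<Phi>K K \<omega> = (\<Prod>k<H0. P k (eps (\<sigma> k) \<omega>)) * exp (\<Sum>k<K. e k (eps (\<sigma> k) \<omega>))"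
      if "H0 \<le> K" for K
      unfolding eq3 eq4[OF that] ..
    have lim2: "(\<lambda>K. (\<Prod>k<H0. P k (eps (\<sigma> k) \<omega>)) * exp (\<Sum>k<K. e k (eps (\<sigma> k) \<omega>))) \<longlonglongrightarrow> \<Phi> \<omega>"
      unfolding \<Phi>_def by (intro tendsto_intros summable_LIMSEQ sme)
    show "(\<lambda>K. \<Phi>K K \<omega>) \<longlonglongrightarrow> \<Phi> \<omega>"
      by (rule Lim_transform_eventually[OF lim2]) (unfold eventually_sequentially, rule exI[of _ H0], simp add: eq34)
  qed
  have \<Psi>m[measurable]: "\<Psi> \<in> borel_measurable M" unfolding \<Psi>_def by measurable
  have \<Phi>m[measurable]: "\<Phi> \<in> borel_measurable M" unfolding \<Phi>_def by measurable
  have \<Phi>Km[measurable]: "\<Phi>K K \<in> borel_measurable M" for K unfolding \<Phi>K_def by measurable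
  have incE: "incseq (\<lambda>K. expectation (\<Psi>K K))"
    by (intro incseq_SucI integral_mono int\<Psi>K \<Psi>K_inc)
  have bddE: "bdd_above (range (\<lambda>K. expectation (\<Psi>K K)))"
    using E\<Psi>b by (intro bdd_aboveI[where M="exp (suminf u)"]) auto
  have int\<Psi>: "integrable M \<Psi>"
  proof (rule integrable_monotone_convergence[OF int\<Psi>K])
    show "AE x in M. mono (\<lambda>n. \<Psi>K n x)" by (intro AE_I2 incseq_SucI \<Psi>K_inc)
    show "AE x in M. (\<lambda>i. \<Psi>K i x) \<longlonglongrightarrow> \<Psi> x" using AS by eventually_elim (use conv in blast)
    show "(\<lambda>i. expectation (\<Psi>K i)) \<longlonglongrightarrow> (SUP K. expectation (\<Psi>K K))"
      by (rule LIMSEQ_incseq_SUP[OF bddE incE])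
  qed simp
  have dom: "AE \<omega> in M. norm (\<Phi>K K \<omega>) \<le> \<Psi> \<omega>" for K
    using AS
  proof eventually_elim
    case (elim \<omega>)
    have "norm (\<Phi>K K \<omega>) = (\<Prod>k<K. \<bar>\<phi> k (eps (\<sigma> k) \<omega>)\<bar>)" unfolding \<Phi>K_def by (simp add: abs_prod)
    also have "\<dots> \<le> \<Psi>K K \<omega>" unfolding \<Psi>K_def by (intro prod_mono) (auto simp: \<phi>\<psi>)
    also have "\<dots> \<le> \<Psi> \<omega>"
      by (rule incseq_le[OF incseq_SucI conjunct1[OF conv[OF elim]]]) (rule \<Psi>K_inc)
    finally show ?case .
  qed
  have limAE: "AE \<omega> in M. (\<lambda>K. \<Phi>K K \<omega>) \<longlonglongrightarrow> \<Phi> \<omega>" using AS by eventually_elim (use conv in blast)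
  show "integrable M (\<lambda>\<omega>. (\<Prod>k<H0. P k (eps (\<sigma> k) \<omega>)) * exp (\<Sum>k. e k (eps (\<sigma> k) \<omega>)))"
    using integrable_dominated_convergence[OF \<Phi>m \<Phi>Km int\<Psi> limAE dom] unfolding \<Phi>_def .
  have "(\<lambda>K. expectation (\<Phi>K K)) \<longlonglongrightarrow> expectation \<Phi>"
    by (rule integral_dominated_convergence[OF \<Phi>m \<Phi>Km int\<Psi> limAE dom])
  then show "(\<lambda>K. \<Prod>k<K. expectation (\<lambda>\<omega>. P k (eps 1 \<omega>) * exp (e k (eps 1 \<omega>))))
           \<longlonglongrightarrow> expectation (\<lambda>\<omega>. (\<Prod>k<H0. P k (eps (\<sigma> k) \<omega>)) * exp (\<Sum>k. e k (eps (\<sigma> k) \<omega>)))"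
    unfolding E\<Phi>K \<Phi>_def \<phi>_def .
qed

end


lemma mv_scaleR_right: "(A::real^'n^'m) *v (c *\<^sub>R x) = c *\<^sub>R (A *v x)"
  by (simp add: Finite_Cartesian_Product.vec_eq_iff matrix_vector_mult_def sum_distrib_left mult_ac)

lemma mv_scaleR_left: "((c *\<^sub>R A)::real^'n^'m) *v x = c *\<^sub>R (A *v x)"
  by (simp add: Finite_Cartesian_Product.vec_eq_iff matrix_vector_mult_def sum_distrib_left mult_ac)

definition mabs :: "real^'n^'m \<Rightarrow> real" where "mabs A = (\<Sum>i\<in>UNIV. \<Sum>j\<in>UNIV. \<bar>A$i$j\<bar>)"

lemma mabs_ge: "\<bar>A $ i $ j\<bar> \<le> mabs A"
proof -
  have "\<bar>A $ i $ j\<bar> \<le> (\<Sum>j\<in>UNIV. \<bar>A$i$j\<bar>)" by (rule member_le_sum) auto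
  also have "\<dots> \<le> mabs A" unfolding mabs_def by (rule member_le_sum) (auto intro: sum_nonneg)
  finally show ?thesis .
qed

lemma mv_comp_bound:
  assumes "\<And>i j. \<bar>(A::real^'n^'m) $ i $ j\<bar> \<le> b"
  shows "\<bar>(A *v x) $ i\<bar> \<le> b * nrm x"
proof -
  have "\<bar>(A *v x) $ i\<bar> = \<bar>\<Sum>j\<in>UNIV. A$i$j * x$j\<bar>" by (simp add: matrix_vector_mult_def)
  also have "\<dots> \<le> (\<Sum>j\<in>UNIV. \<bar>A$i$j\<bar> * \<bar>x$j\<bar>)" by (rule order_trans[OF sum_abs]) (simp add: abs_mult)
  also have "\<dots> \<le> (\<Sum>j\<in>UNIV. b * \<bar>x$j\<bar>)" by (intro sum_mono mult_right_mono assms) auto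
  also have "\<dots> = b * nrm x" by (simp add: nrm_def sum_distrib_left)
  finally show ?thesis .
qed

lemma nrm_mv_bound:
  assumes "\<And>i j. \<bar>(A::real^'n^'m) $ i $ j\<bar> \<le> b"
  shows "nrm (A *v x) \<le> real CARD('m) * b * nrm x"
proof -
  have "nrm (A *v x) = (\<Sum>i\<in>UNIV. \<bar>(A *v x) $ i\<bar>)" by (simp add: nrm_def)
  also have "\<dots> \<le> (\<Sum>i\<in>(UNIV::'m set). b * nrm x)"
    by (intro sum_mono mv_comp_bound assms)
  finally have "nrm (A *v x) \<le> (\<Sum>i\<in>(UNIV::'m set). b * nrm x)" .
  then show ?thesis by simp
qed

lemma mm_entry_bound:
  assumes "\<And>i j. \<bar>(X::real^'n^'m) $ i $ j\<bar> \<le> b"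
  shows "\<bar>(X ** Y) $ i $ j\<bar> \<le> b * mabs Y"
proof -
  have b0: "0 \<le> b" using assms[of i undefined] by (meson abs_ge_zero order_trans)
  have "\<bar>(X ** Y) $ i $ j\<bar> = \<bar>\<Sum>l\<in>UNIV. X$i$l * Y$l$j\<bar>" by (simp add: matrix_matrix_mult_def)
  also have "\<dots> \<le> (\<Sum>l\<in>UNIV. \<bar>X$i$l\<bar> * \<bar>Y$l$j\<bar>)" by (rule order_trans[OF sum_abs]) (simp add: abs_mult)
  also have "\<dots> \<le> (\<Sum>l\<in>UNIV. b * \<bar>Y$l$j\<bar>)" by (intro sum_mono mult_right_mono assms) auto
  also have "\<dots> = b * (\<Sum>l\<in>UNIV. \<bar>Y$l$j\<bar>)" by (simp add: sum_distrib_left)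
  also have "\<dots> \<le> b * mabs Y"
    unfolding mabs_def by (intro mult_left_mono b0 sum_mono member_le_sum) auto
  finally show ?thesis .
qed

lemma norm_le_nrm: "norm (x::real^'n) \<le> nrm x"
  unfolding nrm_def by (rule norm_le_l1_cart)

locale egarch = eps_model M eps for M :: "'a measure" and eps :: "int \<Rightarrow> 'a \<Rightarrow> real^'n::finite" +
  fixes W1 W2 :: "real^'n^'n" and alpha1 :: "real^'n" and rho0 rho1 lam0 lam1 \<Theta> \<xi> c0 r0 :: real
  assumes inv: "invertible (mat 1 - lam0 *\<^sub>R W2)"
    and decay: "\<And>k i j. \<bar>mpow (lam1 *\<^sub>R Smat lam0 W2) k $ i $ j\<bar> \<le> c0 * r0 ^ k"
    and r0: "0 < r0" "r0 < 1"
begin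

definition "gS = Smat lam0 W2"
definition "gB = lam1 *\<^sub>R gS"
definition "gMm = rho0 *\<^sub>R (lam1 *\<^sub>R (Smat lam0 W2 ** W1)) + rho1 *\<^sub>R mat 1"
definition "gA = matrix_inv ((1 - lam1) *\<^sub>R mat 1 - lam0 *\<^sub>R W2)"
definition "mv = (\<chi> i. expectation (\<lambda>\<omega>. \<bar>eps 1 \<omega> $ i\<bar>))"
definition "Gf z = (\<chi> i. \<Theta> * z $ i + \<xi> * (\<bar>z $ i\<bar> - mv $ i))"
definition "gD k = (case k of 0 \<Rightarrow> rho0 *\<^sub>R (gS ** W1) | Suc v \<Rightarrow> lam1 ^ v *\<^sub>R (mpow gS (Suc v) ** gMm))"
definition "cG = \<bar>\<Theta>\<bar> + \<bar>\<xi>\<bar> + \<bar>\<xi>\<bar> * nrm mv"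
definition "CD = max (mabs (gD 0)) (c0 * mabs (gS ** gMm) / r0)"

lemma gfun_eq: "gfun M eps \<Theta> \<xi> t \<omega> = Gf (eps t \<omega>)"
proof -
  have "expectation (\<lambda>\<omega>'. \<bar>eps t \<omega>' $ i\<bar>) = mv $ i" for i
    unfolding mv_def using integral_eq[of "\<lambda>z. \<bar>z $ i\<bar>" t 1] by simp
  then show ?thesis unfolding gfun_def Gf_def by simp
qed

lemma Gf_meas[measurable]: "Gf \<in> borel_measurable borel"
  unfolding Gf_def by (rule vec_borel_measurable) simp

lemma cG0: "0 \<le> cG" unfolding cG_def using nrm_nonneg[of mv] by simp

lemma Gf_bound: "nrm (Gf z) \<le> cG * (1 + nrm z)"
proof -
  have "nrm (Gf z) \<le> (\<Sum>j\<in>UNIV. (\<bar>\<Theta>\<bar> + \<bar>\<xi>\<bar>) * \<bar>z $ j\<bar> + \<bar>\<xi>\<bar> * \<bar>mv $ j\<bar>)"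
    unfolding nrm_def Gf_def
  proof (intro sum_mono)
    fix j
    have "\<bar>\<Theta> * z $ j + \<xi> * (\<bar>z $ j\<bar> - mv $ j)\<bar> \<le> \<bar>\<Theta>\<bar> * \<bar>z $ j\<bar> + \<bar>\<xi>\<bar> * (\<bar>z $ j\<bar> + \<bar>mv $ j\<bar>)"
      by (rule order_trans[OF abs_triangle_ineq]) (auto simp: abs_mult intro!: add_mono mult_left_mono)
    then show "\<bar>(\<chi> i. \<Theta> * z $ i + \<xi> * (\<bar>z $ i\<bar> - mv $ i)) $ j\<bar> \<le> (\<bar>\<Theta>\<bar> + \<bar>\<xi>\<bar>) * \<bar>z $ j\<bar> + \<bar>\<xi>\<bar> * \<bar>mv $ j\<bar>"
      by (simp add: algebra_simps)
  qed
  also have "\<dots> = (\<bar>\<Theta>\<bar> + \<bar>\<xi>\<bar>) * nrm z + \<bar>\<xi>\<bar> * nrm mv"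
    by (simp add: nrm_def sum.distrib sum_distrib_left)
  also have "\<dots> \<le> cG * (1 + nrm z)"
    unfolding cG_def using nrm_nonneg[of z] nrm_nonneg[of mv]
    by (simp add: algebra_simps add_mono mult_right_mono)
  finally show ?thesis .
qed

lemma gB_decay: "\<bar>mpow gB k $ i $ j\<bar> \<le> c0 * r0 ^ k"
  using decay unfolding gB_def gS_def .

lemma c00: "0 \<le> c0" using gB_decay[of 0 i i] by (simp add: Finite_Cartesian_Product.mat_def)

lemma mpow_gB: "mpow gB v = lam1 ^ v *\<^sub>R mpow gS v"
  unfolding gB_def by (rule mpow_scale)

lemma gD_Suc: "gD (Suc v) = mpow gB v ** (gS ** gMm)"
  unfolding gD_def mpow_gB by (simp only: nat.case mpow_Suc') (simp add: matrix_mul_assoc scalar_matrix_assoc)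

lemma CD_bound: "\<bar>gD k $ i $ j\<bar> \<le> CD * r0 ^ k"
proof (cases k)
  case 0
  then show ?thesis unfolding CD_def using mabs_ge[of "gD 0" i j] by simp
next
  case (Suc v)
  have "\<bar>gD k $ i $ j\<bar> \<le> c0 * r0 ^ v * mabs (gS ** gMm)"
    unfolding Suc gD_Suc by (rule mm_entry_bound[OF gB_decay])
  also have "\<dots> = (c0 * mabs (gS ** gMm) / r0) * r0 ^ k"
    using r0 unfolding Suc by (simp add: field_simps)
  also have "\<dots> \<le> CD * r0 ^ k"
    unfolding CD_def using r0 by (intro mult_right_mono) auto
  finally show ?thesis .
qed

lemma CD0: "0 \<le> CD" unfolding CD_def by (rule order_trans[OF _ max.cobounded1]) (auto simp: mabs_def intro!: sum_nonneg)

lemma e_bound: "\<bar>(gD k *v Gf z) $ i\<bar> \<le> (CD * cG) * r0 ^ k * (1 + nrm z)"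
proof -
  have "\<bar>(gD k *v Gf z) $ i\<bar> \<le> CD * r0 ^ k * nrm (Gf z)" by (rule mv_comp_bound[OF CD_bound])
  also have "\<dots> \<le> CD * r0 ^ k * (cG * (1 + nrm z))"
    using CD0 r0 by (intro mult_left_mono Gf_bound) auto
  finally show ?thesis by (simp add: mult_ac)
qed

end


context egarch
begin

definition "good t \<omega> \<longleftrightarrow> summable (\<lambda>k. r0 ^ k * (1 + nrm (eps (t - int k) \<omega>)))"

lemma AE_good: "AE \<omega> in M. good t \<omega>"
  unfolding good_def using AE_summable[of r0 "\<lambda>k. t - int k"] r0 by simp

lemma good_shift:
  assumes g: "good t \<omega>"
  shows "summable (\<lambda>k. r0 ^ k * (1 + nrm (eps (t - int k - 1) \<omega>)))"
proof -
  have "summable (\<lambda>k. r0 ^ Suc k * (1 + nrm (eps (t - int (Suc k)) \<omega>)))"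
    using g unfolding good_def by (subst summable_Suc_iff)
  then have "summable (\<lambda>k. (1/r0) * (r0 ^ Suc k * (1 + nrm (eps (t - int (Suc k)) \<omega>))))"
    by (rule summable_mult)
  moreover have "(\<lambda>k. (1/r0) * (r0 ^ Suc k * (1 + nrm (eps (t - int (Suc k)) \<omega>)))) =
      (\<lambda>k. r0 ^ k * (1 + nrm (eps (t - int k - 1) \<omega>)))"
    using r0 by (auto simp: fun_eq_iff algebra_simps)
  ultimately show ?thesis by simp
qed

lemma summable_by:
  fixes f :: "nat \<Rightarrow> 'b::banach"
  assumes "summable (\<lambda>k. r0 ^ k * (1 + nrm (eps (\<sigma> k) \<omega>)))"
    and "\<And>k. norm (f k) \<le> C * (r0 ^ k * (1 + nrm (eps (\<sigma> k) \<omega>)))"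
  shows "summable f"
proof (rule summable_comparison_test'[where N=0])
  show "summable (\<lambda>k. C * (r0 ^ k * (1 + nrm (eps (\<sigma> k) \<omega>))))" by (rule summable_mult[OF assms(1)])
  show "norm (f n) \<le> C * (r0 ^ n * (1 + nrm (eps (\<sigma> n) \<omega>)))" for n by (rule assms(2))
qed

lemma mpow_gB_vec: "lam1 ^ v *\<^sub>R (mpow gS v *v y) = mpow gB v *v y"
  by (simp add: mpow_gB mv_scaleR_left)

lemma rep:
  assumes g: "good t \<omega>"
  shows "(\<lambda>v. logvol_series M eps \<Theta> \<xi> W1 W2 alpha1 rho0 rho1 lam0 lam1 t v \<omega>) sums
           (gA *v alpha1 + (\<Sum>k. gD k *v Gf (eps (t - int k) \<omega>)))"
    and "summable (\<lambda>k. gD k *v Gf (eps (t - int k) \<omega>))"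
proof -
  define G where "G s = Gf (eps s \<omega>)" for s
  define T1 where "T1 v = mpow gB v *v (gS *v alpha1)" for v
  define V2 where "V2 v = rho0 *\<^sub>R (mpow gB v *v (gS *v (W1 *v G (t - int v))))" for v
  define V3 where "V3 v = rho1 *\<^sub>R (mpow gB v *v (gS *v G (t - int v - 1)))" for v
  define U where "U k = gD k *v G (t - int k)" for k
  have lv: "logvol_series M eps \<Theta> \<xi> W1 W2 alpha1 rho0 rho1 lam0 lam1 t v \<omega> = T1 v + (V2 v + V3 v)" for v
    unfolding logvol_series_def Delta_def T1_def V2_def V3_def G_def gfun_eq gS_def[symmetric] mpow_gB_vec
    by (simp add: matrix_vector_right_distrib mv_scaleR_right add.assoc)
  have sT1: "T1 sums (gA *v alpha1)"
    unfolding T1_def gB_def gS_def gA_def by (rule A_ident[OF inv decay]) (use r0 in auto)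
  have sV2: "summable V2"
  proof (rule summable_by[OF g[unfolded good_def]])
    fix v
    have "norm (V2 v) \<le> \<bar>rho0\<bar> * nrm ((mpow gB v ** (gS ** W1)) *v G (t - int v))"
      unfolding V2_def by (simp add: matrix_vector_mul_assoc mult_left_mono norm_le_nrm)
    also have "\<dots> \<le> \<bar>rho0\<bar> * (real CARD('n) * (c0 * r0 ^ v * mabs (gS ** W1)) * nrm (G (t - int v)))"
      by (intro mult_left_mono nrm_mv_bound mm_entry_bound gB_decay) auto
    also have "\<dots> \<le> \<bar>rho0\<bar> * (real CARD('n) * (c0 * r0 ^ v * mabs (gS ** W1)) * (cG * (1 + nrm (eps (t - int v) \<omega>))))"
      unfolding G_def using c00 r0 by (intro mult_left_mono Gf_bound) (auto simp: mabs_def intro!: sum_nonneg mult_nonneg_nonneg)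
    finally show "norm (V2 v) \<le> (\<bar>rho0\<bar> * real CARD('n) * c0 * mabs (gS ** W1) * cG) * (r0 ^ v * (1 + nrm (eps (t - int v) \<omega>)))"
      by (simp add: mult_ac)
  qed
  have sV3: "summable V3"
  proof (rule summable_by[OF good_shift[OF g]])
    fix v
    have "norm (V3 v) \<le> \<bar>rho1\<bar> * nrm ((mpow gB v ** gS) *v G (t - int v - 1))"
      unfolding V3_def by (simp add: matrix_vector_mul_assoc mult_left_mono norm_le_nrm)
    also have "\<dots> \<le> \<bar>rho1\<bar> * (real CARD('n) * (c0 * r0 ^ v * mabs gS) * nrm (G (t - int v - 1)))"
      by (intro mult_left_mono nrm_mv_bound mm_entry_bound gB_decay) auto
    also have "\<dots> \<le> \<bar>rho1\<bar> * (real CARD('n) * (c0 * r0 ^ v * mabs gS) * (cG * (1 + nrm (eps (t - int v - 1) \<omega>))))"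
      unfolding G_def using c00 r0 by (intro mult_left_mono Gf_bound) (auto simp: mabs_def intro!: sum_nonneg mult_nonneg_nonneg)
    finally show "norm (V3 v) \<le> (\<bar>rho1\<bar> * real CARD('n) * c0 * mabs gS * cG) * (r0 ^ v * (1 + nrm (eps (t - int v - 1) \<omega>)))"
      by (simp add: mult_ac)
  qed
  have U0: "U 0 = V2 0"
    unfolding U_def V2_def gD_def by (simp add: mv_scaleR_left matrix_vector_mul_assoc)
  have US: "U (Suc v) = V2 (Suc v) + V3 v" for v
  proof -
    have t: "t - int (Suc v) = t - int v - 1" by simp
    have "U (Suc v) = mpow gB v *v (gS *v (gMm *v G (t - int v - 1)))"
      unfolding U_def gD_Suc t by (simp add: matrix_vector_mul_assoc)
    also have "\<dots> = V2 (Suc v) + V3 v"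
      unfolding V2_def V3_def gMm_def t gS_def[symmetric]
      by (simp add: matrix_vector_mult_add_rdistrib matrix_vector_right_distrib mv_scaleR_left mv_scaleR_right
          matrix_vector_mul_assoc[symmetric] mpow_Suc' gB_def del: mpow.simps(2))
    finally show ?thesis .
  qed
  have "(\<lambda>v. V2 (Suc v)) sums (suminf V2 - V2 0)"
    using sV2 by (simp add: sums_Suc_iff summable_sums)
  then have "(\<lambda>v. V2 (Suc v) + V3 v) sums (suminf V2 - V2 0 + suminf V3)"
    by (rule sums_add) (use sV3 in \<open>rule summable_sums\<close>)
  then have "(\<lambda>v. U (Suc v)) sums (suminf V2 - V2 0 + suminf V3)" unfolding US .
  then have sU: "U sums (suminf V2 + suminf V3)" unfolding sums_Suc_iff U0 by simp
  then show "summable (\<lambda>k. gD k *v Gf (eps (t - int k) \<omega>))" unfolding U_def G_def by (rule sums_summable)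
  have "(\<lambda>v. T1 v + (V2 v + V3 v)) sums (gA *v alpha1 + (suminf V2 + suminf V3))"
    by (intro sums_add sT1 summable_sums sV2 sV3)
  moreover have "suminf U = suminf V2 + suminf V3" using sU by (simp add: sums_iff)
  ultimately show "(\<lambda>v. logvol_series M eps \<Theta> \<xi> W1 W2 alpha1 rho0 rho1 lam0 lam1 t v \<omega>) sums
           (gA *v alpha1 + (\<Sum>k. gD k *v Gf (eps (t - int k) \<omega>)))"
    unfolding lv U_def G_def by simp
qed

definition "ee i k z = (1/2) * (gD k *v Gf z) $ i"

lemma Y_rep:
  assumes g: "good t \<omega>"
  shows "Yproc M eps \<Theta> \<xi> W1 W2 alpha1 rho0 rho1 lam0 lam1 t \<omega> $ i =
           exp ((1/2) * (gA *v alpha1) $ i) * (eps t \<omega> $ i * exp (\<Sum>k. ee i k (eps (t - int k) \<omega>)))"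
    and "summable (\<lambda>k. ee i k (eps (t - int k) \<omega>))"
proof -
  have sU: "summable (\<lambda>k. gD k *v Gf (eps (t - int k) \<omega>))" by (rule rep(2)[OF g])
  have ci: "(\<Sum>k. gD k *v Gf (eps (t - int k) \<omega>)) $ i = (\<Sum>k. (gD k *v Gf (eps (t - int k) \<omega>)) $ i)"
    by (rule bounded_linear.suminf[OF bounded_linear_vec_nth sU])
  have sUi: "summable (\<lambda>k. (gD k *v Gf (eps (t - int k) \<omega>)) $ i)"
    by (rule bounded_linear.summable[OF bounded_linear_vec_nth sU])
  show "summable (\<lambda>k. ee i k (eps (t - int k) \<omega>))" unfolding ee_def by (rule summable_mult[OF sUi])
  have suml: "(\<Sum>v. logvol_series M eps \<Theta> \<xi> W1 W2 alpha1 rho0 rho1 lam0 lam1 t v \<omega>) =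
        gA *v alpha1 + (\<Sum>k. gD k *v Gf (eps (t - int k) \<omega>))"
    using rep(1)[OF g] by (simp add: sums_iff)
  have e1: "(\<Sum>k. ee i k (eps (t - int k) \<omega>)) = (1/2) * (\<Sum>k. (gD k *v Gf (eps (t - int k) \<omega>)) $ i)"
    unfolding ee_def by (rule suminf_mult[OF sUi])
  show "Yproc M eps \<Theta> \<xi> W1 W2 alpha1 rho0 rho1 lam0 lam1 t \<omega> $ i =
           exp ((1/2) * (gA *v alpha1) $ i) * (eps t \<omega> $ i * exp (\<Sum>k. ee i k (eps (t - int k) \<omega>)))"
    unfolding Yproc_def vec_lambda_beta suml e1 vector_add_component ci distrib_left exp_add by simp
qed

lemma ee_bound: "\<bar>ee i k z\<bar> \<le> (CD * cG) * r0 ^ k * (1 + nrm z)"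
proof -
  have "\<bar>ee i k z\<bar> \<le> \<bar>(gD k *v Gf z) $ i\<bar>" unfolding ee_def by simp
  also have "\<dots> \<le> (CD * cG) * r0 ^ k * (1 + nrm z)" by (rule e_bound)
  finally show ?thesis .
qed

lemma Gf_comp_meas[measurable]: "(\<lambda>x. Gf x $ j) \<in> borel_measurable borel"
  unfolding Gf_def vec_lambda_beta by measurable

lemma ee_meas[measurable]: "ee i k \<in> borel_measurable borel"
  unfolding ee_def matrix_vector_mult_def vec_lambda_beta by measurable

lemma aCD: "0 \<le> CD * cG" using CD0 cG0 by simp

end


lemma exp_minus_one_bound: "\<bar>exp (x::real) - 1\<bar> \<le> \<bar>x\<bar> * exp \<bar>x\<bar>"
proof (cases "0 \<le> x")
  case True
  have "exp (1 * x) \<le> 1 + 1 * (x * exp x)" using Submission.exp_small[of 1 x] True by simp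
  then show ?thesis using True by simp
next
  case False
  have "1 + x \<le> exp x" by (rule exp_ge_add_one_self)
  moreover have "exp x \<le> 1" using False by simp
  moreover have "1 \<le> exp \<bar>x\<bar>" by simp
  ultimately have "\<bar>exp x - 1\<bar> \<le> \<bar>x\<bar> * 1" using False by (simp add: abs_if; linarith)
  also have "\<dots> \<le> \<bar>x\<bar> * exp \<bar>x\<bar>" by (intro mult_left_mono) auto
  finally show ?thesis .
qed

context eps_model
begin

lemma int_g:
  assumes a: "0 \<le> a"
  shows "integrable M (\<lambda>\<omega>. a * (1 + nrm (eps s \<omega>)) * exp (a * (1 + nrm (eps s \<omega>))))"
proof (rule int_bound[where f="\<lambda>z. a * (1 + nrm z) * exp (a * (1 + nrm z))" and a="2*a" and C="exp (2*a)"])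
  fix z :: "real^'n"
  have y: "0 \<le> a * (1 + nrm z)" using a nrm_nonneg[of z] by simp
  have "\<bar>a * (1 + nrm z) * exp (a * (1 + nrm z))\<bar> = a * (1 + nrm z) * exp (a * (1 + nrm z))" using y by simp
  also have "\<dots> \<le> exp (a * (1 + nrm z)) * exp (a * (1 + nrm z))"
    by (intro mult_right_mono) (auto simp: add.commute intro: order_trans[OF _ exp_ge_add_one_self])
  also have "\<dots> = exp (a * (1 + nrm z) + a * (1 + nrm z))" by (rule exp_add[symmetric])
  also have "\<dots> = exp (2 * a + 2 * a * nrm z)" by (rule arg_cong[where f=exp]) (simp add: algebra_simps)
  also have "\<dots> = exp (2 * a) * exp (2 * a * nrm z)" by (rule exp_add)
  finally show "\<bar>a * (1 + nrm z) * exp (a * (1 + nrm z))\<bar> \<le> exp (2 * a) * exp (2 * a * nrm z)" .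
qed (use a in auto)

lemma cprod:
  fixes e :: "nat \<Rightarrow> real^'n \<Rightarrow> real"
  assumes em[measurable]: "\<And>k. e k \<in> borel_measurable borel"
    and eb: "\<And>k z. \<bar>e k z\<bar> \<le> a * r ^ k * (1 + nrm z)"
    and a: "0 \<le> a" and r: "0 \<le> r" "r < 1"
  shows "convergent_prod (\<lambda>k. expectation (\<lambda>\<omega>. exp (e k (eps 1 \<omega>))))"
proof (rule abs_convergent_prod_imp_convergent_prod, rule summable_imp_abs_convergent_prod)
  define g where "g z = a * (1 + nrm z) * exp (a * (1 + nrm z))" for z :: "real^'n"
  define D where "D = expectation (\<lambda>\<omega>. g (eps 1 \<omega>))"
  have intg: "integrable M (\<lambda>\<omega>. g (eps 1 \<omega>))" unfolding g_def by (rule int_g[OF a])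
  have rk: "r ^ k \<le> 1" for k using r by (simp add: power_le_one)
  have inte: "integrable M (\<lambda>\<omega>. exp (e k (eps 1 \<omega>)))" for k
  proof (rule int_bound[where a=a and C="exp a"])
    fix z :: "real^'n"
    have "a * r ^ k * (1 + nrm z) = r ^ k * (a * (1 + nrm z))" by (simp add: mult_ac)
    also have "\<dots> \<le> a * (1 + nrm z)"
      by (rule mult_left_le_one_le) (use a r rk[of k] nrm_nonneg[of z] in auto)
    finally have "e k z \<le> a * (1 + nrm z)" using eb[of k z] by linarith
    then have "exp (e k z) \<le> exp (a + a * nrm z)" by (simp add: algebra_simps)
    then show "\<bar>exp (e k z)\<bar> \<le> exp a * exp (a * nrm z)" by (simp add: exp_add)
  qed (use a in auto)
  have pt: "\<bar>exp (e k z) - 1\<bar> \<le> r ^ k * g z" for k z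
  proof -
    have ek: "\<bar>e k z\<bar> \<le> r ^ k * (a * (1 + nrm z))" using eb[of k z] by (simp add: mult_ac)
    have "r ^ k * (a * (1 + nrm z)) \<le> a * (1 + nrm z)"
      by (rule mult_left_le_one_le) (use a r rk[of k] nrm_nonneg[of z] in auto)
    then have ek2: "\<bar>e k z\<bar> \<le> a * (1 + nrm z)" using ek by linarith
    have "\<bar>exp (e k z) - 1\<bar> \<le> \<bar>e k z\<bar> * exp \<bar>e k z\<bar>" by (rule exp_minus_one_bound)
    also have "\<dots> \<le> (r ^ k * (a * (1 + nrm z))) * exp (a * (1 + nrm z))"
      using ek ek2 by (intro mult_mono) auto
    finally show ?thesis unfolding g_def by (simp add: mult_ac)
  qed
  show "summable (\<lambda>k. norm (expectation (\<lambda>\<omega>. exp (e k (eps 1 \<omega>))) - 1))"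
  proof (rule summable_comparison_test'[where N=0])
    show "summable (\<lambda>k. r ^ k * D)" using r by (intro summable_mult2 summable_geometric) auto
    fix k
    have "norm (expectation (\<lambda>\<omega>. exp (e k (eps 1 \<omega>))) - 1) = \<bar>expectation (\<lambda>\<omega>. exp (e k (eps 1 \<omega>)) - 1)\<bar>"
      using inte[of k] by (simp add: Bochner_Integration.integral_diff prob_space)
    also have "\<dots> \<le> expectation (\<lambda>\<omega>. \<bar>exp (e k (eps 1 \<omega>)) - 1\<bar>)"
      by (rule integral_abs_bound)
    also have "\<dots> \<le> expectation (\<lambda>\<omega>. r ^ k * g (eps 1 \<omega>))"
      by (intro integral_mono pt integrable_mult_right intg Bochner_Integration.integrable_abs
          Bochner_Integration.integrable_diff inte) auto
    also have "\<dots> = r ^ k * D" unfolding D_def by simp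
    finally show "norm (norm (expectation (\<lambda>\<omega>. exp (e k (eps 1 \<omega>))) - 1)) \<le> r ^ k * D" by simp
  qed
qed

lemma core_inst:
  fixes P0 :: "real^'n \<Rightarrow> real" and e :: "nat \<Rightarrow> real^'n \<Rightarrow> real"
  assumes P0m[measurable]: "P0 \<in> borel_measurable borel"
    and em[measurable]: "\<And>k. e k \<in> borel_measurable borel"
    and Pb: "\<And>z. \<bar>P0 z\<bar> \<le> (1 + nrm z) ^ p"
    and eb: "\<And>k z. \<bar>e k z\<bar> \<le> a * r ^ k * (1 + nrm z)"
    and a: "0 \<le> a" and r: "0 \<le> r" "r < 1"
  shows "integrable M (\<lambda>\<omega>. P0 (eps t \<omega>) * exp (\<Sum>k. e k (eps (t - int k) \<omega>)))"
    and "convergent_prod (\<lambda>v. expectation (\<lambda>\<omega>. exp (e (Suc v) (eps 1 \<omega>))))"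
    and "expectation (\<lambda>\<omega>. P0 (eps t \<omega>) * exp (\<Sum>k. e k (eps (t - int k) \<omega>))) =
         expectation (\<lambda>\<omega>. P0 (eps 1 \<omega>) * exp (e 0 (eps 1 \<omega>))) *
         (\<Prod>v. expectation (\<lambda>\<omega>. exp (e (Suc v) (eps 1 \<omega>))))"
proof -
  define P where "P k = (if k = 0 then P0 else (\<lambda>_. 1))" for k :: nat
  have inj: "inj (\<lambda>k::nat. t - int k)" by (auto simp: inj_on_def)
  have Pm: "P k \<in> borel_measurable borel" for k unfolding P_def by auto
  have Pb': "\<bar>P k z\<bar> \<le> (1 + nrm z) ^ p" for k z
    using Pb[of z] nrm_nonneg[of z] unfolding P_def by (auto intro: one_le_power)
  have P1: "1 \<le> k \<Longrightarrow> P k z = 1" for k z unfolding P_def by auto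
  note C = core[of "\<lambda>k. t - int k" P e p 1 a r, OF inj Pm em Pb' P1 eb a r]
  have pr: "(\<Prod>k<1. P k (eps (t - int k) \<omega>)) = P0 (eps t \<omega>)" for \<omega> by (simp add: P_def)
  show "integrable M (\<lambda>\<omega>. P0 (eps t \<omega>) * exp (\<Sum>k. e k (eps (t - int k) \<omega>)))"
    using C(1) unfolding pr .
  define b where "b v = expectation (\<lambda>\<omega>. exp (e (Suc v) (eps 1 \<omega>)))" for v
  define a0 where "a0 = expectation (\<lambda>\<omega>. P0 (eps 1 \<omega>) * exp (e 0 (eps 1 \<omega>)))"
  have cp: "convergent_prod b"
    unfolding b_def
  proof (rule cprod[where a=a and r=r])
    show "\<bar>e (Suc k) z\<bar> \<le> a * r ^ k * (1 + nrm z)" for k z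
    proof -
      have "a * r ^ Suc k * (1 + nrm z) \<le> a * r ^ k * (1 + nrm z)"
        using a r nrm_nonneg[of z] by (intro mult_right_mono mult_left_mono) (auto simp: mult_left_le_one_le)
      then show ?thesis using eb[of "Suc k" z] by linarith
    qed
  qed (use a r in auto)
  then show "convergent_prod (\<lambda>v. expectation (\<lambda>\<omega>. exp (e (Suc v) (eps 1 \<omega>))))" unfolding b_def .
  have lim1: "(\<lambda>K. \<Prod>k<K. expectation (\<lambda>\<omega>. P k (eps 1 \<omega>) * exp (e k (eps 1 \<omega>))))
      \<longlonglongrightarrow> expectation (\<lambda>\<omega>. P0 (eps t \<omega>) * exp (\<Sum>k. e k (eps (t - int k) \<omega>)))"
    using C(2) unfolding pr .
  then have lim2: "(\<lambda>K. \<Prod>k<Suc K. expectation (\<lambda>\<omega>. P k (eps 1 \<omega>) * exp (e k (eps 1 \<omega>))))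
      \<longlonglongrightarrow> expectation (\<lambda>\<omega>. P0 (eps t \<omega>) * exp (\<Sum>k. e k (eps (t - int k) \<omega>)))"
    by (rule LIMSEQ_Suc)
  have eqp: "(\<Prod>k<Suc K. expectation (\<lambda>\<omega>. P k (eps 1 \<omega>) * exp (e k (eps 1 \<omega>)))) = a0 * (\<Prod>v<K. b v)" for K
    unfolding prod.lessThan_Suc_shift by (simp add: P_def a0_def b_def)
  have "(\<lambda>n. \<Prod>i\<le>n. b i) \<longlonglongrightarrow> prodinf b" by (rule convergent_prod_LIMSEQ[OF cp])
  then have "(\<lambda>n. \<Prod>i<Suc n. b i) \<longlonglongrightarrow> prodinf b" by (simp add: lessThan_Suc_atMost)
  then have "(\<lambda>n. \<Prod>i<n. b i) \<longlonglongrightarrow> prodinf b" by (rule LIMSEQ_imp_Suc)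
  then have "(\<lambda>K. a0 * (\<Prod>v<K. b v)) \<longlonglongrightarrow> a0 * prodinf b" by (rule tendsto_mult_left)
  with lim2 show "expectation (\<lambda>\<omega>. P0 (eps t \<omega>) * exp (\<Sum>k. e k (eps (t - int k) \<omega>))) =
         expectation (\<lambda>\<omega>. P0 (eps 1 \<omega>) * exp (e 0 (eps 1 \<omega>))) *
         (\<Prod>v. expectation (\<lambda>\<omega>. exp (e (Suc v) (eps 1 \<omega>))))"
    unfolding eqp a0_def b_def by (rule LIMSEQ_unique)
qed

end


lemma mv_meas[measurable (raw)]:
  assumes [measurable]: "f \<in> borel_measurable N"
  shows "(\<lambda>\<omega>. (A::real^'n^'m) *v f \<omega>) \<in> borel_measurable N"
proof (rule vec_borel_measurable)
  fix i
  have [measurable]: "(\<lambda>\<omega>. f \<omega> $ j) \<in> borel_measurable N" for j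
    using measurable_compose[OF assms borel_measurable_nth] by simp
  show "(\<lambda>\<omega>. (A *v f \<omega>) $ i) \<in> borel_measurable N"
    unfolding matrix_vector_mult_def vec_lambda_beta by measurable
qed

lemma vec_nth_meas[measurable (raw)]:
  assumes "f \<in> borel_measurable N"
  shows "(\<lambda>x. (f x :: real^'n) $ i) \<in> borel_measurable N"
  using measurable_compose[OF assms borel_measurable_nth] by simp

context egarch
begin

lemma r0': "0 \<le> r0" "r0 < 1" using r0 by auto

abbreviation "Yp \<equiv> Yproc M eps \<Theta> \<xi> W1 W2 alpha1 rho0 rho1 lam0 lam1"

lemma Gf_eps_meas[measurable]: "(\<lambda>\<omega>. Gf (eps t \<omega>)) \<in> borel_measurable M"
  using measurable_compose[OF meas_eps Gf_meas] by simp

lemma Y_meas[measurable]: "(\<lambda>\<omega>. Yp t \<omega> $ i) \<in> borel_measurable M"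
  unfolding Yproc_def logvol_series_def Delta_def gfun_eq vec_lambda_beta by measurable

lemma ee0: "ee i 0 z = (1/2) * rho0 * ((gS ** W1) *v Gf z) $ i"
  unfolding ee_def gD_def by (simp add: mv_scaleR_left)

lemma eeS: "ee i (Suc v) z = (1/2) * lam1 ^ v * ((mpow gS (Suc v) ** gMm) *v Gf z) $ i"
  unfolding ee_def gD_def by (simp add: mv_scaleR_left)

lemma AE_Yrep: "AE \<omega> in M. Yp t \<omega> $ i =
     exp ((1/2) * (gA *v alpha1) $ i) * (eps t \<omega> $ i * exp (\<Sum>k. ee i k (eps (t - int k) \<omega>)))
   \<and> summable (\<lambda>k. ee i k (eps (t - int k) \<omega>))"
  using AE_good[of t] by eventually_elim (use Y_rep in blast)

lemma mom1:
  shows "convergent_prod (\<lambda>v. expectation (\<lambda>\<omega>. exp (ee i (Suc v) (eps 1 \<omega>))))"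
    and "expectation (\<lambda>\<omega>. Yp t \<omega> $ i) = exp ((1/2) * (gA *v alpha1) $ i) *
          (expectation (\<lambda>\<omega>. eps 1 \<omega> $ i * exp (ee i 0 (eps 1 \<omega>))) *
           (\<Prod>v. expectation (\<lambda>\<omega>. exp (ee i (Suc v) (eps 1 \<omega>)))))"
proof -
  have Pb: "\<bar>z $ i\<bar> \<le> (1 + nrm z) ^ 1" for z :: "real^'n" using comp_le_nrm[of z i] by simp
  have P0m: "(\<lambda>z::real^'n. z $ i) \<in> borel_measurable borel" by simp
  note CI2 = core_inst(2)[of "\<lambda>z. z $ i" "ee i" 1 "CD * cG" r0, OF P0m ee_meas Pb ee_bound aCD r0']
  note CI3 = core_inst(3)[of "\<lambda>z. z $ i" "ee i" 1 "CD * cG" r0 t, OF P0m ee_meas Pb ee_bound aCD r0']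
  show "convergent_prod (\<lambda>v. expectation (\<lambda>\<omega>. exp (ee i (Suc v) (eps 1 \<omega>))))"
    by (rule CI2)
  have "expectation (\<lambda>\<omega>. Yp t \<omega> $ i) =
      expectation (\<lambda>\<omega>. exp ((1/2) * (gA *v alpha1) $ i) * (eps t \<omega> $ i * exp (\<Sum>k. ee i k (eps (t - int k) \<omega>))))"
    by (rule integral_cong_AE) (use AE_Yrep[of t i] in \<open>auto elim: AE_mp\<close>)
  also have "\<dots> = exp ((1/2) * (gA *v alpha1) $ i) * expectation (\<lambda>\<omega>. eps t \<omega> $ i * exp (\<Sum>k. ee i k (eps (t - int k) \<omega>)))"
    by simp
  finally show "expectation (\<lambda>\<omega>. Yp t \<omega> $ i) = exp ((1/2) * (gA *v alpha1) $ i) *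
          (expectation (\<lambda>\<omega>. eps 1 \<omega> $ i * exp (ee i 0 (eps 1 \<omega>))) *
           (\<Prod>v. expectation (\<lambda>\<omega>. exp (ee i (Suc v) (eps 1 \<omega>)))))"
    using CI3 by simp
qed

lemma mom3:
  shows "convergent_prod (\<lambda>v. expectation (\<lambda>\<omega>. exp (ee i (Suc v) (eps 1 \<omega>) + ee j (Suc v) (eps 1 \<omega>))))"
    and "expectation (\<lambda>\<omega>. Yp t \<omega> $ i * Yp t \<omega> $ j) =
          exp ((1/2) * (gA *v alpha1) $ i + (1/2) * (gA *v alpha1) $ j) *
          (expectation (\<lambda>\<omega>. eps 1 \<omega> $ i * eps 1 \<omega> $ j * exp (ee i 0 (eps 1 \<omega>) + ee j 0 (eps 1 \<omega>))) *
           (\<Prod>v. expectation (\<lambda>\<omega>. exp (ee i (Suc v) (eps 1 \<omega>) + ee j (Suc v) (eps 1 \<omega>)))))"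
proof -
  define e where "e k z = ee i k z + ee j k z" for k z
  have em[measurable]: "e k \<in> borel_measurable borel" for k unfolding e_def by measurable
  have eb: "\<bar>e k z\<bar> \<le> (2 * (CD * cG)) * r0 ^ k * (1 + nrm z)" for k z
    unfolding e_def using ee_bound[of i k z] ee_bound[of j k z] by (simp add: abs_mult mult_ac)
  have a2: "0 \<le> 2 * (CD * cG)" using aCD by simp
  have Pb: "\<bar>z $ i * z $ j\<bar> \<le> (1 + nrm z) ^ 2" for z :: "real^'n"
  proof -
    have "\<bar>z $ i\<bar> \<le> 1 + nrm z" "\<bar>z $ j\<bar> \<le> 1 + nrm z" using comp_le_nrm[of z] by (auto intro: add_increasing)
    then show ?thesis unfolding abs_mult power2_eq_square by (intro mult_mono) auto
  qed
  have P0m: "(\<lambda>z::real^'n. z $ i * z $ j) \<in> borel_measurable borel" by simp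
  note CI2 = core_inst(2)[of "\<lambda>z. z $ i * z $ j" e 2 "2 * (CD * cG)" r0, OF P0m em Pb eb a2 r0']
  note CI3 = core_inst(3)[of "\<lambda>z. z $ i * z $ j" e 2 "2 * (CD * cG)" r0 t, OF P0m em Pb eb a2 r0']
  show "convergent_prod (\<lambda>v. expectation (\<lambda>\<omega>. exp (ee i (Suc v) (eps 1 \<omega>) + ee j (Suc v) (eps 1 \<omega>))))"
    using CI2 unfolding e_def .
  have "expectation (\<lambda>\<omega>. Yp t \<omega> $ i * Yp t \<omega> $ j) =
      expectation (\<lambda>\<omega>. exp ((1/2) * (gA *v alpha1) $ i + (1/2) * (gA *v alpha1) $ j) *
        (eps t \<omega> $ i * eps t \<omega> $ j * exp (\<Sum>k. e k (eps (t - int k) \<omega>))))"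
  proof (rule integral_cong_AE)
    show "AE \<omega> in M. Yp t \<omega> $ i * Yp t \<omega> $ j = exp ((1/2) * (gA *v alpha1) $ i + (1/2) * (gA *v alpha1) $ j) *
        (eps t \<omega> $ i * eps t \<omega> $ j * exp (\<Sum>k. e k (eps (t - int k) \<omega>)))"
      using AE_Yrep[of t i] AE_Yrep[of t j]
    proof eventually_elim
      case (elim \<omega>)
      have "(\<Sum>k. e k (eps (t - int k) \<omega>)) = (\<Sum>k. ee i k (eps (t - int k) \<omega>)) + (\<Sum>k. ee j k (eps (t - int k) \<omega>))"
        unfolding e_def using elim by (intro suminf_add[symmetric]) auto
      then show ?case using elim by (simp add: exp_add mult_ac)
    qed
  next
    show "(\<lambda>\<omega>. Yp t \<omega> $ i * Yp t \<omega> $ j) \<in> borel_measurable M" by measurable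
  next
    show "(\<lambda>\<omega>. exp ((1/2) * (gA *v alpha1) $ i + (1/2) * (gA *v alpha1) $ j) *
        (eps t \<omega> $ i * eps t \<omega> $ j * exp (\<Sum>k. e k (eps (t - int k) \<omega>)))) \<in> borel_measurable M"
      by measurable
  qed
  also have "\<dots> = exp ((1/2) * (gA *v alpha1) $ i + (1/2) * (gA *v alpha1) $ j) *
        expectation (\<lambda>\<omega>. eps t \<omega> $ i * eps t \<omega> $ j * exp (\<Sum>k. e k (eps (t - int k) \<omega>)))"
    by simp
  finally show "expectation (\<lambda>\<omega>. Yp t \<omega> $ i * Yp t \<omega> $ j) =
          exp ((1/2) * (gA *v alpha1) $ i + (1/2) * (gA *v alpha1) $ j) *
          (expectation (\<lambda>\<omega>. eps 1 \<omega> $ i * eps 1 \<omega> $ j * exp (ee i 0 (eps 1 \<omega>) + ee j 0 (eps 1 \<omega>))) *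
           (\<Prod>v. expectation (\<lambda>\<omega>. exp (ee i (Suc v) (eps 1 \<omega>) + ee j (Suc v) (eps 1 \<omega>)))))"
    using CI3 unfolding e_def by simp
qed

lemma momp: "integrable M (\<lambda>\<omega>. \<bar>Yp t \<omega> $ i\<bar> ^ p)"
proof -
  define e where "e k z = real p * ee i k z" for k z
  have em[measurable]: "e k \<in> borel_measurable borel" for k unfolding e_def by measurable
  have eb: "\<bar>e k z\<bar> \<le> (real p * (CD * cG)) * r0 ^ k * (1 + nrm z)" for k z
    unfolding e_def using ee_bound[of i k z] by (simp add: abs_mult mult_ac mult_left_mono)
  have ap: "0 \<le> real p * (CD * cG)" using aCD by simp
  have Pb: "\<bar>\<bar>z $ i\<bar> ^ p\<bar> \<le> (1 + nrm z) ^ p" for z :: "real^'n"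
  proof -
    have "\<bar>z $ i\<bar> \<le> 1 + nrm z" using comp_le_nrm[of z] by (auto intro: add_increasing)
    then show ?thesis by (simp add: power_mono)
  qed
  have P0m: "(\<lambda>z::real^'n. \<bar>z $ i\<bar> ^ p) \<in> borel_measurable borel" by simp
  note CI1 = core_inst(1)[of "\<lambda>z. \<bar>z $ i\<bar> ^ p" e p "real p * (CD * cG)" r0 t, OF P0m em Pb eb ap r0']
  have "integrable M (\<lambda>\<omega>. exp (real p * ((1/2) * (gA *v alpha1) $ i)) *
      (\<bar>eps t \<omega> $ i\<bar> ^ p * exp (\<Sum>k. e k (eps (t - int k) \<omega>))))"
    by (rule integrable_mult_right[OF CI1])
  moreover have "AE \<omega> in M. \<bar>Yp t \<omega> $ i\<bar> ^ p = exp (real p * ((1/2) * (gA *v alpha1) $ i)) *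
      (\<bar>eps t \<omega> $ i\<bar> ^ p * exp (\<Sum>k. e k (eps (t - int k) \<omega>)))"
    using AE_Yrep[of t i]
  proof eventually_elim
    case (elim \<omega>)
    have s: "(\<Sum>k. e k (eps (t - int k) \<omega>)) = real p * (\<Sum>k. ee i k (eps (t - int k) \<omega>))"
      unfolding e_def using elim by (intro suminf_mult) auto
    show ?case unfolding s exp_of_nat_mult using elim(1)
      by (simp add: abs_mult power_mult_distrib)
  qed
  moreover have "(\<lambda>\<omega>. \<bar>Yp t \<omega> $ i\<bar> ^ p) \<in> borel_measurable M" by measurable
  moreover have "(\<lambda>\<omega>. exp (real p * ((1/2) * (gA *v alpha1) $ i)) *
      (\<bar>eps t \<omega> $ i\<bar> ^ p * exp (\<Sum>k. e k (eps (t - int k) \<omega>)))) \<in> borel_measurable M" by measurable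
  ultimately show ?thesis using integrable_cong_AE by blast
qed

end


context egarch
begin

lemma cross_lim:
  fixes H :: nat and i j :: 'n and t :: int
  defines "P \<equiv> \<lambda>k (z::real^'n). (if k = 0 then z $ j else 1) * (if k = H then z $ i else 1)"
    and "e \<equiv> \<lambda>k z. ee j k z + (if H \<le> k then ee i (k - H) z else 0)"
  shows "(\<lambda>K. exp ((1/2) * (gA *v alpha1) $ i) * exp ((1/2) * (gA *v alpha1) $ j) *
            (\<Prod>k<K. expectation (\<lambda>\<omega>. P k (eps 1 \<omega>) * exp (e k (eps 1 \<omega>)))))
         \<longlonglongrightarrow> expectation (\<lambda>\<omega>. Yp t \<omega> $ i * Yp (t + int H) \<omega> $ j)"
proof -
  define \<sigma> where "\<sigma> k = t + int H - int k" for k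
  have inj: "inj \<sigma>" unfolding \<sigma>_def by (auto simp: inj_on_def)
  have Pm[measurable]: "P k \<in> borel_measurable borel" for k
    unfolding P_def by (cases "k = 0"; cases "k = H") simp_all
  have em[measurable]: "e k \<in> borel_measurable borel" for k
    unfolding e_def by (cases "H \<le> k") simp_all
  have Pb: "\<bar>P k z\<bar> \<le> (1 + nrm z) ^ 2" for k z
  proof -
    have c: "\<bar>z $ l\<bar> \<le> 1 + nrm z" for l using comp_le_nrm[of z l] by (auto intro: add_increasing)
    have one: "1 \<le> 1 + nrm z" using nrm_nonneg[of z] by simp
    have "\<bar>(if k = 0 then z $ j else 1)\<bar> \<le> 1 + nrm z" using c one by auto
    moreover have "\<bar>(if k = H then z $ i else 1)\<bar> \<le> 1 + nrm z" using c one by auto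
    ultimately show ?thesis unfolding P_def abs_mult power2_eq_square by (intro mult_mono) auto
  qed
  have P1: "Suc H \<le> k \<Longrightarrow> P k z = 1" for k z unfolding P_def by auto
  define a where "a = CD * cG + CD * cG / r0 ^ H"
  have a0: "0 \<le> a" unfolding a_def using aCD r0 by simp
  have eb: "\<bar>e k z\<bar> \<le> a * r0 ^ k * (1 + nrm z)" for k z
  proof -
    have N: "0 \<le> 1 + nrm z" using nrm_nonneg[of z] by simp
    have b2: "\<bar>(if H \<le> k then ee i (k - H) z else 0)\<bar> \<le> (CD * cG / r0 ^ H) * r0 ^ k * (1 + nrm z)"
    proof (cases "H \<le> k")
      case True
      have "r0 ^ (k - H) = r0 ^ k / r0 ^ H" using True r0 by (simp add: power_diff)
      then show ?thesis using True ee_bound[of i "k - H" z] by simp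
    next
      case False
      then show ?thesis using aCD r0 N by simp
    qed
    have eq: "(CD * cG + CD * cG / r0 ^ H) * r0 ^ k * (1 + nrm z) =
        CD * cG * r0 ^ k * (1 + nrm z) + CD * cG / r0 ^ H * r0 ^ k * (1 + nrm z)"
      by (simp add: algebra_simps)
    show ?thesis unfolding e_def a_def
      using abs_triangle_ineq[of "ee j k z" "(if H \<le> k then ee i (k - H) z else 0)"] ee_bound[of j k z] b2 eq
      by linarith
  qed
  note C = core[of \<sigma> P e 2 "Suc H" a r0, OF inj Pm em Pb P1 eb a0 r0']
  define \<Phi> where "\<Phi> \<omega> = (\<Prod>k<Suc H. P k (eps (\<sigma> k) \<omega>)) * exp (\<Sum>k. e k (eps (\<sigma> k) \<omega>))" for \<omega>
  have \<Phi>m[measurable]: "\<Phi> \<in> borel_measurable M" unfolding \<Phi>_def by measurable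
  have AEeq: "AE \<omega> in M. Yp t \<omega> $ i * Yp (t + int H) \<omega> $ j =
      exp ((1/2) * (gA *v alpha1) $ i) * exp ((1/2) * (gA *v alpha1) $ j) * \<Phi> \<omega>"
    using AE_Yrep[of t i] AE_Yrep[of "t + int H" j]
  proof eventually_elim
    case (elim \<omega>)
    define si where "si = (\<Sum>k. ee i k (eps (t - int k) \<omega>))"
    define sj where "sj = (\<Sum>k. ee j k (eps (t + int H - int k) \<omega>))"
    have Yi: "Yp t \<omega> $ i = exp ((1/2) * (gA *v alpha1) $ i) * (eps t \<omega> $ i * exp si)"
      using elim unfolding si_def by simp
    have Yj: "Yp (t + int H) \<omega> $ j = exp ((1/2) * (gA *v alpha1) $ j) * (eps (t + int H) \<omega> $ j * exp sj)"
      using elim unfolding sj_def by simp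
    have sumj: "(\<lambda>k. ee j k (eps (\<sigma> k) \<omega>)) sums sj"
      unfolding sj_def \<sigma>_def using elim by (simp add: summable_sums)
    define F where "F k = (if H \<le> k then ee i (k - H) (eps (\<sigma> k) \<omega>) else 0)" for k
    have "(\<lambda>m. F (m + H)) = (\<lambda>m. ee i m (eps (t - int m) \<omega>))"
      unfolding F_def \<sigma>_def by (simp add: fun_eq_iff)
    then have "(\<lambda>m. F (m + H)) sums si" unfolding si_def using elim by (simp add: summable_sums)
    moreover have "(\<Sum>m<H. F m) = 0" unfolding F_def by simp
    ultimately have sumi: "F sums si" using sums_iff_shift[of F H si] by simp
    have "(\<lambda>k. e k (eps (\<sigma> k) \<omega>)) sums (sj + si)"
      unfolding e_def F_def[symmetric] by (rule sums_add[OF sumj sumi])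
    then have se: "(\<Sum>k. e k (eps (\<sigma> k) \<omega>)) = sj + si" by (simp add: sums_iff)
    have pr: "(\<Prod>k<Suc H. P k (eps (\<sigma> k) \<omega>)) = eps (t + int H) \<omega> $ j * eps t \<omega> $ i"
      unfolding P_def prod.distrib by (simp add: \<sigma>_def)
    show ?case unfolding \<Phi>_def se pr Yi Yj by (simp add: exp_add mult_ac)
  qed
  have "expectation (\<lambda>\<omega>. Yp t \<omega> $ i * Yp (t + int H) \<omega> $ j) =
      expectation (\<lambda>\<omega>. exp ((1/2) * (gA *v alpha1) $ i) * exp ((1/2) * (gA *v alpha1) $ j) * \<Phi> \<omega>)"
  proof (rule integral_cong_AE[OF _ _ AEeq])
    show "(\<lambda>\<omega>. Yp t \<omega> $ i * Yp (t + int H) \<omega> $ j) \<in> borel_measurable M" by measurable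
    show "(\<lambda>\<omega>. exp ((1/2) * (gA *v alpha1) $ i) * exp ((1/2) * (gA *v alpha1) $ j) * \<Phi> \<omega>) \<in> borel_measurable M"
      by measurable
  qed
  also have "\<dots> = exp ((1/2) * (gA *v alpha1) $ i) * exp ((1/2) * (gA *v alpha1) $ j) * expectation \<Phi>"
    by simp
  finally have E: "expectation (\<lambda>\<omega>. Yp t \<omega> $ i * Yp (t + int H) \<omega> $ j) =
      exp ((1/2) * (gA *v alpha1) $ i) * exp ((1/2) * (gA *v alpha1) $ j) * expectation \<Phi>" .
  have "(\<lambda>K. \<Prod>k<K. expectation (\<lambda>\<omega>. P k (eps 1 \<omega>) * exp (e k (eps 1 \<omega>)))) \<longlonglongrightarrow> expectation \<Phi>"
    using C(2) unfolding \<Phi>_def .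
  then show ?thesis unfolding E by (intro tendsto_mult_left)
qed

lemma cross_nat:
  fixes H :: nat
  shows "expectation (\<lambda>\<omega>. Yp t \<omega> $ i * Yp (t + int H) \<omega> $ j) =
         expectation (\<lambda>\<omega>. Yp t' \<omega> $ i * Yp (t' + int H) \<omega> $ j)"
  using cross_lim[of i j H t] cross_lim[of i j H t'] by (rule LIMSEQ_unique)

lemma cross:
  "expectation (\<lambda>\<omega>. Yp t \<omega> $ i * Yp (t + h) \<omega> $ j) = expectation (\<lambda>\<omega>. Yp 0 \<omega> $ i * Yp h \<omega> $ j)"
proof (cases "0 \<le> h")
  case True
  then obtain H where h: "h = int H" by (metis nonneg_eq_int)
  show ?thesis unfolding h using cross_nat[of t i H j 0] by simp
next
  case False
  define H where "H = nat (- h)"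
  have h: "h = - int H" using False unfolding H_def by simp
  have "expectation (\<lambda>\<omega>. Yp t \<omega> $ i * Yp (t + h) \<omega> $ j) =
        expectation (\<lambda>\<omega>. Yp (t - int H) \<omega> $ j * Yp (t - int H + int H) \<omega> $ i)"
    unfolding h by (simp add: mult.commute)
  also have "\<dots> = expectation (\<lambda>\<omega>. Yp (- int H) \<omega> $ j * Yp (- int H + int H) \<omega> $ i)"
    by (rule cross_nat)
  also have "\<dots> = expectation (\<lambda>\<omega>. Yp 0 \<omega> $ i * Yp h \<omega> $ j)"
    unfolding h by (simp add: mult.commute)
  finally show ?thesis .
qed

end


context egarch
begin

lemma ee0_raw: "ee i 0 (eps 1 \<omega>) = (1/2) * rho0 * ((Smat lam0 W2 ** W1) *v gfun M eps \<Theta> \<xi> 1 \<omega>) $ i"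
  unfolding ee0 gfun_eq gS_def ..

lemma eeS_raw: "ee i (Suc v) (eps 1 \<omega>) = (1/2) * lam1 ^ v *
    ((mpow (Smat lam0 W2) (Suc v) ** (rho0 *\<^sub>R (lam1 *\<^sub>R (Smat lam0 W2 ** W1)) + rho1 *\<^sub>R mat 1)) *v gfun M eps \<Theta> \<xi> 1 \<omega>) $ i"
  unfolding eeS gfun_eq gS_def gMm_def ..

end

theorem theorem1:
  fixes M :: "'a measure"
    and eps :: "int \<Rightarrow> 'a \<Rightarrow> real^'n"
    and W1 W2 :: "real^'n^'n"
    and alpha1 :: "real^'n"
    and rho0 rho1 lam0 lam1 \<Theta> \<xi> :: real
  defines "S \<equiv> Smat lam0 W2"
    and "g \<equiv> gfun M eps \<Theta> \<xi>"
    and "Y \<equiv> Yproc M eps \<Theta> \<xi> W1 W2 alpha1 rho0 rho1 lam0 lam1"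
    and "Mm \<equiv> rho0 *\<^sub>R (lam1 *\<^sub>R (Smat lam0 W2 ** W1)) + rho1 *\<^sub>R mat 1"
    and "A \<equiv> matrix_inv ((1 - lam1) *\<^sub>R mat 1 - lam0 *\<^sub>R W2)"
  assumes P: "prob_space M"
    and xi: "\<xi> \<ge> 0" and Theta: "\<bar>\<Theta>\<bar> < \<xi>"
    and inv: "invertible (mat 1 - lam0 *\<^sub>R W2)"
    and sr1: "spec_rad (lam1 *\<^sub>R S) < 1"
    and sr0: "spec_rad (lam0 *\<^sub>R W2) < 1"
    and indep: "prob_space.indep_vars M (\<lambda>_. borel) (\<lambda>(t, i) \<omega>. eps t \<omega> $ i) UNIV"
    and normal: "\<And>t i. distributed M lborel (\<lambda>\<omega>. eps t \<omega> $ i) std_normal_density"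
  shows
    "(\<forall>t. AE \<omega> in M. summable (\<lambda>v. logvol_series M eps \<Theta> \<xi> W1 W2 alpha1 rho0 rho1 lam0 lam1 t v \<omega>))
   \<and> (\<forall>t i (p::nat). integrable M (\<lambda>\<omega>. \<bar>Y t \<omega> $ i\<bar> ^ p))
   \<and> (\<forall>t i. prob_space.expectation M (\<lambda>\<omega>. Y t \<omega> $ i) = prob_space.expectation M (\<lambda>\<omega>. Y 0 \<omega> $ i))
   \<and> (\<forall>t h i j. prob_space.expectation M (\<lambda>\<omega>. Y t \<omega> $ i * Y (t + h) \<omega> $ j)
              = prob_space.expectation M (\<lambda>\<omega>. Y 0 \<omega> $ i * Y h \<omega> $ j))
   \<and> (\<forall>t i.
        convergent_prod (\<lambda>v. prob_space.expectation M (\<lambda>\<omega>.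
            exp ((1/2) * lam1 ^ v * ((mpow S (Suc v) ** Mm) *v g 1 \<omega>) $ i)))
      \<and> prob_space.expectation M (\<lambda>\<omega>. Y t \<omega> $ i)
        = exp ((1/2) * (A *v alpha1) $ i)
          * prob_space.expectation M (\<lambda>\<omega>. eps 1 \<omega> $ i
               * exp ((1/2) * rho0 * ((S ** W1) *v g 1 \<omega>) $ i))
          * (\<Prod>v. prob_space.expectation M (\<lambda>\<omega>.
               exp ((1/2) * lam1 ^ v * ((mpow S (Suc v) ** Mm) *v g 1 \<omega>) $ i))))
   \<and> (\<forall>t i.
        convergent_prod (\<lambda>v. prob_space.expectation M (\<lambda>\<omega>.
            exp (lam1 ^ v * ((mpow S (Suc v) ** Mm) *v g 1 \<omega>) $ i)))
      \<and> prob_space.expectation M (\<lambda>\<omega>. (Y t \<omega> $ i)\<^sup>2)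
        = exp ((A *v alpha1) $ i)
          * prob_space.expectation M (\<lambda>\<omega>. (eps 1 \<omega> $ i)\<^sup>2
               * exp (rho0 * ((S ** W1) *v g 1 \<omega>) $ i))
          * (\<Prod>v. prob_space.expectation M (\<lambda>\<omega>.
               exp (lam1 ^ v * ((mpow S (Suc v) ** Mm) *v g 1 \<omega>) $ i))))
   \<and> (\<forall>t i j.
        convergent_prod (\<lambda>v. prob_space.expectation M (\<lambda>\<omega>.
            exp ((1/2) * lam1 ^ v * (((mpow S (Suc v) ** Mm) *v g 1 \<omega>) $ i
                                     + ((mpow S (Suc v) ** Mm) *v g 1 \<omega>) $ j))))
      \<and> prob_space.expectation M (\<lambda>\<omega>. Y t \<omega> $ i * Y t \<omega> $ j)
        = exp ((1/2) * ((A *v alpha1) $ i + (A *v alpha1) $ j))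
          * prob_space.expectation M (\<lambda>\<omega>. eps 1 \<omega> $ i * eps 1 \<omega> $ j
               * exp ((1/2) * rho0 * (((S ** W1) *v g 1 \<omega>) $ i + ((S ** W1) *v g 1 \<omega>) $ j)))
          * (\<Prod>v. prob_space.expectation M (\<lambda>\<omega>.
               exp ((1/2) * lam1 ^ v * (((mpow S (Suc v) ** Mm) *v g 1 \<omega>) $ i
                                        + ((mpow S (Suc v) ** Mm) *v g 1 \<omega>) $ j)))))"
proof -
  have EM: "eps_model M eps" unfolding eps_model_def eps_model_axioms_def using P indep normal by auto
  obtain c0 r0 where r0: "0 < r0" "r0 < 1" and c0: "0 \<le> c0"
    and dec: "\<And>k i j. \<bar>mpow (lam1 *\<^sub>R Smat lam0 W2) k $ i $ j\<bar> \<le> c0 * r0 ^ k"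
    using specrad_decay[OF sr1[unfolded S_def]] by blast
  interpret G: egarch M eps W1 W2 alpha1 rho0 rho1 lam0 lam1 \<Theta> \<xi> c0 r0
    by (intro egarch.intro EM egarch_axioms.intro inv dec r0)
  have A_eq: "A = G.gA" unfolding A_def G.gA_def ..
  have g1: "\<And>\<omega>. g 1 \<omega> = gfun M eps \<Theta> \<xi> 1 \<omega>" unfolding g_def ..
  show ?thesis
    unfolding S_def g_def Y_def Mm_def A_def
  proof (intro conjI allI)
    fix t
    show "AE \<omega> in M. summable (\<lambda>v. logvol_series M eps \<Theta> \<xi> W1 W2 alpha1 rho0 rho1 lam0 lam1 t v \<omega>)"
      using G.AE_good[of t] by eventually_elim (use G.rep(1) in \<open>blast intro: sums_summable\<close>)
  next
    fix t i p
    show "integrable M (\<lambda>\<omega>. \<bar>Yproc M eps \<Theta> \<xi> W1 W2 alpha1 rho0 rho1 lam0 lam1 t \<omega> $ i\<bar> ^ p)"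
      by (rule G.momp)
  next
    fix t i
    show "prob_space.expectation M (\<lambda>\<omega>. Yproc M eps \<Theta> \<xi> W1 W2 alpha1 rho0 rho1 lam0 lam1 t \<omega> $ i) =
          prob_space.expectation M (\<lambda>\<omega>. Yproc M eps \<Theta> \<xi> W1 W2 alpha1 rho0 rho1 lam0 lam1 0 \<omega> $ i)"
      using G.mom1(2)[where t=t and i=i] G.mom1(2)[where t=0 and i=i] by simp
  next
    fix t h i j
    show "prob_space.expectation M (\<lambda>\<omega>. Yproc M eps \<Theta> \<xi> W1 W2 alpha1 rho0 rho1 lam0 lam1 t \<omega> $ i *
            Yproc M eps \<Theta> \<xi> W1 W2 alpha1 rho0 rho1 lam0 lam1 (t + h) \<omega> $ j) =
          prob_space.expectation M (\<lambda>\<omega>. Yproc M eps \<Theta> \<xi> W1 W2 alpha1 rho0 rho1 lam0 lam1 0 \<omega> $ i *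
            Yproc M eps \<Theta> \<xi> W1 W2 alpha1 rho0 rho1 lam0 lam1 h \<omega> $ j)"
      by (rule G.cross)
  next
    fix t i
    show "convergent_prod (\<lambda>v. prob_space.expectation M (\<lambda>\<omega>.
            exp ((1/2) * lam1 ^ v * ((mpow (Smat lam0 W2) (Suc v) ** (rho0 *\<^sub>R (lam1 *\<^sub>R (Smat lam0 W2 ** W1)) + rho1 *\<^sub>R mat 1)) *v gfun M eps \<Theta> \<xi> 1 \<omega>) $ i)))"
      using G.mom1(1)[where i=i] unfolding G.eeS_raw .
    show "prob_space.expectation M (\<lambda>\<omega>. Yproc M eps \<Theta> \<xi> W1 W2 alpha1 rho0 rho1 lam0 lam1 t \<omega> $ i)
        = exp ((1/2) * (matrix_inv ((1 - lam1) *\<^sub>R mat 1 - lam0 *\<^sub>R W2) *v alpha1) $ i)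
          * prob_space.expectation M (\<lambda>\<omega>. eps 1 \<omega> $ i
               * exp ((1/2) * rho0 * ((Smat lam0 W2 ** W1) *v gfun M eps \<Theta> \<xi> 1 \<omega>) $ i))
          * (\<Prod>v. prob_space.expectation M (\<lambda>\<omega>.
               exp ((1/2) * lam1 ^ v * ((mpow (Smat lam0 W2) (Suc v) ** (rho0 *\<^sub>R (lam1 *\<^sub>R (Smat lam0 W2 ** W1)) + rho1 *\<^sub>R mat 1)) *v gfun M eps \<Theta> \<xi> 1 \<omega>) $ i)))"
      unfolding G.mom1(2)[where t=t and i=i] G.eeS_raw G.ee0_raw G.gA_def by (simp add: mult.assoc)
  next
    fix t i
    have e2: "G.ee i (Suc v) (eps 1 \<omega>) + G.ee i (Suc v) (eps 1 \<omega>) =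
        lam1 ^ v * ((mpow (Smat lam0 W2) (Suc v) ** (rho0 *\<^sub>R (lam1 *\<^sub>R (Smat lam0 W2 ** W1)) + rho1 *\<^sub>R mat 1)) *v gfun M eps \<Theta> \<xi> 1 \<omega>) $ i"
      for v \<omega> unfolding G.eeS_raw by simp
    have e0: "G.ee i 0 (eps 1 \<omega>) + G.ee i 0 (eps 1 \<omega>) = rho0 * ((Smat lam0 W2 ** W1) *v gfun M eps \<Theta> \<xi> 1 \<omega>) $ i"
      for \<omega> unfolding G.ee0_raw by simp
    show "convergent_prod (\<lambda>v. prob_space.expectation M (\<lambda>\<omega>.
            exp (lam1 ^ v * ((mpow (Smat lam0 W2) (Suc v) ** (rho0 *\<^sub>R (lam1 *\<^sub>R (Smat lam0 W2 ** W1)) + rho1 *\<^sub>R mat 1)) *v gfun M eps \<Theta> \<xi> 1 \<omega>) $ i)))"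
      using G.mom3(1)[where i=i and j=i] unfolding e2 .
    have sq: "(Yproc M eps \<Theta> \<xi> W1 W2 alpha1 rho0 rho1 lam0 lam1 t \<omega> $ i)\<^sup>2 =
        Yproc M eps \<Theta> \<xi> W1 W2 alpha1 rho0 rho1 lam0 lam1 t \<omega> $ i * Yproc M eps \<Theta> \<xi> W1 W2 alpha1 rho0 rho1 lam0 lam1 t \<omega> $ i"
      for \<omega> by (simp add: power2_eq_square)
    have sq2: "(eps 1 \<omega> $ i)\<^sup>2 = eps 1 \<omega> $ i * eps 1 \<omega> $ i" for \<omega> by (simp add: power2_eq_square)
    show "prob_space.expectation M (\<lambda>\<omega>. (Yproc M eps \<Theta> \<xi> W1 W2 alpha1 rho0 rho1 lam0 lam1 t \<omega> $ i)\<^sup>2)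
        = exp ((matrix_inv ((1 - lam1) *\<^sub>R mat 1 - lam0 *\<^sub>R W2) *v alpha1) $ i)
          * prob_space.expectation M (\<lambda>\<omega>. (eps 1 \<omega> $ i)\<^sup>2
               * exp (rho0 * ((Smat lam0 W2 ** W1) *v gfun M eps \<Theta> \<xi> 1 \<omega>) $ i))
          * (\<Prod>v. prob_space.expectation M (\<lambda>\<omega>.
               exp (lam1 ^ v * ((mpow (Smat lam0 W2) (Suc v) ** (rho0 *\<^sub>R (lam1 *\<^sub>R (Smat lam0 W2 ** W1)) + rho1 *\<^sub>R mat 1)) *v gfun M eps \<Theta> \<xi> 1 \<omega>) $ i)))"
      unfolding sq sq2 G.mom3(2)[where t=t and i=i and j=i] e2 e0 G.gA_def by (simp add: mult.assoc)
  next
    fix t i j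
    have e2: "G.ee i (Suc v) (eps 1 \<omega>) + G.ee j (Suc v) (eps 1 \<omega>) =
        (1/2) * lam1 ^ v * (((mpow (Smat lam0 W2) (Suc v) ** (rho0 *\<^sub>R (lam1 *\<^sub>R (Smat lam0 W2 ** W1)) + rho1 *\<^sub>R mat 1)) *v gfun M eps \<Theta> \<xi> 1 \<omega>) $ i
          + ((mpow (Smat lam0 W2) (Suc v) ** (rho0 *\<^sub>R (lam1 *\<^sub>R (Smat lam0 W2 ** W1)) + rho1 *\<^sub>R mat 1)) *v gfun M eps \<Theta> \<xi> 1 \<omega>) $ j)"
      for v \<omega> unfolding G.eeS_raw by (simp add: algebra_simps)
    have e0: "G.ee i 0 (eps 1 \<omega>) + G.ee j 0 (eps 1 \<omega>) =
        (1/2) * rho0 * (((Smat lam0 W2 ** W1) *v gfun M eps \<Theta> \<xi> 1 \<omega>) $ i + ((Smat lam0 W2 ** W1) *v gfun M eps \<Theta> \<xi> 1 \<omega>) $ j)"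
      for \<omega> unfolding G.ee0_raw by (simp add: algebra_simps)
    show "convergent_prod (\<lambda>v. prob_space.expectation M (\<lambda>\<omega>.
            exp ((1/2) * lam1 ^ v * (((mpow (Smat lam0 W2) (Suc v) ** (rho0 *\<^sub>R (lam1 *\<^sub>R (Smat lam0 W2 ** W1)) + rho1 *\<^sub>R mat 1)) *v gfun M eps \<Theta> \<xi> 1 \<omega>) $ i
                                     + ((mpow (Smat lam0 W2) (Suc v) ** (rho0 *\<^sub>R (lam1 *\<^sub>R (Smat lam0 W2 ** W1)) + rho1 *\<^sub>R mat 1)) *v gfun M eps \<Theta> \<xi> 1 \<omega>) $ j))))"
      using G.mom3(1)[where i=i and j=j] unfolding e2 .
    show "prob_space.expectation M (\<lambda>\<omega>. Yproc M eps \<Theta> \<xi> W1 W2 alpha1 rho0 rho1 lam0 lam1 t \<omega> $ i * Yproc M eps \<Theta> \<xi> W1 W2 alpha1 rho0 rho1 lam0 lam1 t \<omega> $ j)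
        = exp ((1/2) * ((matrix_inv ((1 - lam1) *\<^sub>R mat 1 - lam0 *\<^sub>R W2) *v alpha1) $ i + (matrix_inv ((1 - lam1) *\<^sub>R mat 1 - lam0 *\<^sub>R W2) *v alpha1) $ j))
          * prob_space.expectation M (\<lambda>\<omega>. eps 1 \<omega> $ i * eps 1 \<omega> $ j
               * exp ((1/2) * rho0 * (((Smat lam0 W2 ** W1) *v gfun M eps \<Theta> \<xi> 1 \<omega>) $ i + ((Smat lam0 W2 ** W1) *v gfun M eps \<Theta> \<xi> 1 \<omega>) $ j)))
          * (\<Prod>v. prob_space.expectation M (\<lambda>\<omega>.
               exp ((1/2) * lam1 ^ v * (((mpow (Smat lam0 W2) (Suc v) ** (rho0 *\<^sub>R (lam1 *\<^sub>R (Smat lam0 W2 ** W1)) + rho1 *\<^sub>R mat 1)) *v gfun M eps \<Theta> \<xi> 1 \<omega>) $ i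
                                        + ((mpow (Smat lam0 W2) (Suc v) ** (rho0 *\<^sub>R (lam1 *\<^sub>R (Smat lam0 W2 ** W1)) + rho1 *\<^sub>R mat 1)) *v gfun M eps \<Theta> \<xi> 1 \<omega>) $ j))))"
      unfolding G.mom3(2)[where t=t and i=i and j=j] e2 e0 G.gA_def by (simp add: mult.assoc distrib_left)
  qed
qed


end
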